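(* For every $d\in\mathbb{Z}^+$ there exists a deterministic 1-aware population protocol computing the predicate $R\colon\mathbb{Z}^+\to\{0,1\}$, $R(n)=\mathbb{I}\{n\ge d\}$ (i.e. $R(n)=1$ if $n\ge d$ and $R(n)=0$ otherwise), whose number of states is at most $\log_2 d + \min\{e,z\} + O(1)$, where $e$ is the number of $1$'s in the binary representation of $d$, $z$ is the number of $0$'s in the binary representation of $d-1$, and the $O(1)$ term is an absolute constant independent of $d$.
   Context: A population protocol is a tuple $\Pi=\langle Q,Q_0,Q_1,q_{init},\delta\rangle$ where $Q$ is a finite set of states, $Q=Q_0\sqcup Q_1$ (disjoint union), $q_{init}\in Q$ is the initial state, and $\delta\colon Q^2\to 2^{Q^2}\setminus\{\varnothing\}$ is the transition function. $\Pi$ is deterministic if $|\delta(q_1,q_2)|=1$ for all $q_1,q_2\in Q$. For $n\in\mathbb{Z}^+$, an $n$-size configuration is a function $C\colon[n]\to Q$, where $[n]=\{1,\dots,n\}$; the initial configuration $I_n$ maps every element to $q_{init}$. A pair $(C_1,C_2)$ of $n$-size configurations is a transition if there are distinct $i,j\in[n]$ with $(C_2(i),C_2(j))\in\delta(C_1(i),C_1(j))$ and $C_2(k)=C_1(k)$ for all $k\ne i,j$ (the pair $(i,j)$ is ordered). $D$ is reachable from $C$ if there is a finite sequence $C=C_1,\dots,C_k=D$ ($k\ge1$) of configurations with each $(C_i,C_{i+1})$ a transition. An execution is an infinite sequence $(C_i)_{i\ge1}$ with $C_1=I_n$ for some $n$ and each $(C_i,C_{i+1})$ a transition; it is fair if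 whenever a configuration $C$ occurs infinitely often in it and $D$ is reachable from $C$, then $D$ also occurs infinitely often. $\Pi$ is a 1-aware population protocol computing $R\colon\mathbb{Z}^+\to\{0,1\}$ if for every $n\in\mathbb{Z}^+$: if $R(n)=0$ then every configuration $C$ reachable from $I_n$ satisfies $C([n])\subseteq Q_0$; and if $R(n)=1$ then for every fair execution $(C_i)_{i\ge1}$ with $C_1=I_n$ there is $i_0$ such that $C_i([n])\subseteq Q_1$ for all $i\ge i_0$. The number of states of $\Pi$ is $|Q|$. *)

theory Defs
  imports Complex_Main
begin

text \<open>States are encoded as natural numbers (any finite state set can be so encoded).
A configuration of size n is represented by a total function nat => nat, of which
only the values on {1..n} are meaningful; transitions leave all other positions unchanged.\<close>

type_synonym state = nat
type_synonym config = "nat \<Rightarrow> state"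
type_synonym trans_fun = "state \<Rightarrow> state \<Rightarrow> (state \<times> state) set"

definition population_protocol ::
  "state set \<Rightarrow> state set \<Rightarrow> state set \<Rightarrow> state \<Rightarrow> trans_fun \<Rightarrow> bool" where
  "population_protocol Q Q0 Q1 qinit \<delta> \<longleftrightarrow>
     finite Q \<and> Q = Q0 \<union> Q1 \<and> Q0 \<inter> Q1 = {} \<and> qinit \<in> Q \<and>
     (\<forall>q1\<in>Q. \<forall>q2\<in>Q. \<delta> q1 q2 \<subseteq> Q \<times> Q \<and> \<delta> q1 q2 \<noteq> {})"

definition deterministic :: "state set \<Rightarrow> trans_fun \<Rightarrow> bool" where
  "deterministic Q \<delta> \<longleftrightarrow> (\<forall>q1\<in>Q. \<forall>q2\<in>Q. card (\<delta> q1 q2) = 1)"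

definition init_config :: "state \<Rightarrow> config" where
  "init_config qinit = (\<lambda>_. qinit)"

definition transition :: "trans_fun \<Rightarrow> nat \<Rightarrow> config \<Rightarrow> config \<Rightarrow> bool" where
  "transition \<delta> n C1 C2 \<longleftrightarrow>
     (\<exists>i\<in>{1..n}. \<exists>j\<in>{1..n}. i \<noteq> j \<and> (C2 i, C2 j) \<in> \<delta> (C1 i) (C1 j) \<and>
        (\<forall>k. k \<noteq> i \<and> k \<noteq> j \<longrightarrow> C2 k = C1 k))"

definition reachable :: "trans_fun \<Rightarrow> nat \<Rightarrow> config \<Rightarrow> config \<Rightarrow> bool" where
  "reachable \<delta> n = (transition \<delta> n)\<^sup>*\<^sup>*"

definition execution :: "state \<Rightarrow> trans_fun \<Rightarrow> nat \<Rightarrow> (nat \<Rightarrow> config) \<Rightarrow> bool" where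
  "execution qinit \<delta> n E \<longleftrightarrow> E 0 = init_config qinit \<and> (\<forall>i. transition \<delta> n (E i) (E (Suc i)))"

definition fair :: "trans_fun \<Rightarrow> nat \<Rightarrow> (nat \<Rightarrow> config) \<Rightarrow> bool" where
  "fair \<delta> n E \<longleftrightarrow>
     (\<forall>C D. (\<exists>\<^sub>\<infinity>i. E i = C) \<and> reachable \<delta> n C D \<longrightarrow> (\<exists>\<^sub>\<infinity>i. E i = D))"

definition computes_1aware ::
  "state set \<Rightarrow> state set \<Rightarrow> state set \<Rightarrow> state \<Rightarrow> trans_fun \<Rightarrow> (nat \<Rightarrow> bool) \<Rightarrow> bool" where
  "computes_1aware Q Q0 Q1 qinit \<delta> R \<longleftrightarrow>
     (\<forall>n\<ge>1.
        (\<not> R n \<longrightarrow> (\<forall>C. reachable \<delta> n (init_config qinit) C \<longrightarrow> C ` {1..n} \<subseteq> Q0)) \<and>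
        (R n \<longrightarrow> (\<forall>E. execution qinit \<delta> n E \<and> fair \<delta> n E \<longrightarrow>
                    (\<exists>i0. \<forall>i\<ge>i0. E i ` {1..n} \<subseteq> Q1))))"

text \<open>Binary representation (most significant bit first); 0 is written as "0".\<close>
fun binary_digits :: "nat \<Rightarrow> nat list" where
  "binary_digits n = (if n < 2 then [n] else binary_digits (n div 2) @ [n mod 2])"

definition count_ones :: "nat \<Rightarrow> nat" where
  "count_ones n = length (filter (\<lambda>b. b = 1) (binary_digits n))"

definition count_zeros :: "nat \<Rightarrow> nat" where
  "count_zeros n = length (filter (\<lambda>b. b = 0) (binary_digits n))"

end

theory Submission
  imports Defs
begin
declare binary_digits.simps[simp del]

lemma bd01: "binary_digits 0 = [0]" "binary_digits 1 = [1]" "binary_digits (Suc 0) = [1]"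
  by (subst binary_digits.simps; simp)+

definition bt :: "nat \<Rightarrow> nat \<Rightarrow> bool" where "bt x i \<longleftrightarrow> odd (x div 2^i)"

lemma bt_le: "bt x i \<Longrightarrow> 2^i \<le> x"
  unfolding bt_def by (metis div_less even_zero not_le)

lemma bt_Suc: "bt x (Suc i) = bt (x div 2) i"
  unfolding bt_def by (simp add: div_mult2_eq)

lemma bt_0: "bt x 0 = odd x" unfolding bt_def by simp

lemma bt_fin: "finite {i. bt x i}"
proof -
  have "{i. bt x i} \<subseteq> {..<x}"
  proof
    fix i assume "i \<in> {i. bt x i}"
    then have "2^i \<le> x" using bt_le by simp
    moreover have "i < 2^i" by (rule less_exp)
    ultimately have "i < x" by linarith
    then show "i \<in> {..<x}" by simp
  qed
  then show ?thesis using finite_subset by blast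
qed

lemma bd_step: "2 \<le> n \<Longrightarrow> binary_digits n = binary_digits (n div 2) @ [n mod 2]"
  by (subst binary_digits.simps) simp

lemma bt_set_split: "{i. bt n i} = (if odd n then {0} else {}) \<union> Suc ` {i. bt (n div 2) i}"
  (is "?L = ?R")
proof
  show "?L \<subseteq> ?R"
  proof
    fix i assume i: "i \<in> ?L"
    show "i \<in> ?R"
    proof (cases i)
      case 0 then show ?thesis using i by (simp add: bt_0)
    next
      case (Suc k)
      then have "k \<in> {i. bt (n div 2) i}" using i by (simp add: bt_Suc)
      then show ?thesis using Suc by blast
    qed
  qed
  show "?R \<subseteq> ?L"
  proof
    fix i assume i: "i \<in> ?R"
    show "i \<in> ?L"
    proof (cases "i \<in> Suc ` {i. bt (n div 2) i}")
      case True
      then obtain k where "i = Suc k" "bt (n div 2) k" by blast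
      then show ?thesis by (simp add: bt_Suc)
    next
      case False
      then have "odd n" "i = 0" using i by (auto split: if_splits)
      then show ?thesis by (simp add: bt_0)
    qed
  qed
qed

lemma count_ones_eq: "count_ones n = card {i. bt n i}"
proof (induction n rule: less_induct)
  case (less n)
  show ?case
  proof (cases "n < 2")
    case True
    then have n01: "n = 0 \<or> n = 1" by auto
    have z0: "{i. bt 0 i} = {}" by (auto simp: bt_def)
    have z1: "{i. bt 1 i} = {0}"
    proof -
      have "bt 1 i \<longleftrightarrow> i = 0" for i
      proof (cases i)
        case (Suc k)
        have "(2::nat) \<le> 2 * 2^k" by simp
        then have "(1::nat) < 2 * 2^k" by linarith
        then have "(1::nat) div (2 * 2^k) = 0" by (rule div_less)
        then show ?thesis using Suc by (simp add: bt_def)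
      qed (simp add: bt_def)
      then show ?thesis by auto
    qed
    have "count_ones 0 = 0" "count_ones 1 = 1" by (simp_all add: count_ones_def bd01)
    then show ?thesis using n01 z0 z1 by (elim disjE) simp_all
  next
    case False
    then have n2: "2 \<le> n" by simp
    have "count_ones n = count_ones (n div 2) + (if odd n then 1 else 0)"
      unfolding count_ones_def using bd_step[OF n2] by (auto simp: odd_iff_mod_2_eq_one)
    also have "\<dots> = card {i. bt (n div 2) i} + (if odd n then 1 else 0)"
      using less n2 by simp
    also have "\<dots> = card {i. bt n i}"
    proof -
      have c: "card (Suc ` {i. bt (n div 2) i}) = card {i. bt (n div 2) i}"
        by (simp add: card_image)
      have "0 \<notin> Suc ` {i. bt (n div 2) i}" by auto
      then show ?thesis unfolding bt_set_split[of n]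
        using c bt_fin[of "n div 2"] by auto
    qed
    finally show ?thesis .
  qed
qed

lemma zset_split: "2 \<le> n \<Longrightarrow> {i. 2^i \<le> n \<and> \<not> bt n i} =
   (if even n then {0} else {}) \<union> Suc ` {i. 2^i \<le> n div 2 \<and> \<not> bt (n div 2) i}"
  (is "_ \<Longrightarrow> ?L = ?R")
proof -
  assume n2: "2 \<le> n"
  have e: "2^Suc i \<le> n \<longleftrightarrow> 2^i \<le> n div 2" for i
    by (simp add: less_eq_div_iff_mult_less_eq mult.commute)
  show ?thesis
  proof
    show "?L \<subseteq> ?R"
    proof
      fix i assume "i \<in> ?L"
      then show "i \<in> ?R" using e by (cases i) (auto simp: bt_Suc bt_0)
    qed
    show "?R \<subseteq> ?L" using e n2 by (auto simp: bt_Suc bt_0 split: if_splits)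
  qed
qed

lemma count_zeros_eq: "1 \<le> n \<Longrightarrow> count_zeros n = card {i. 2^i \<le> n \<and> \<not> bt n i}"
proof (induction n rule: less_induct)
  case (less n)
  show ?case
  proof (cases "n < 2")
    case True
    then have n1: "n = 1" using less.prems by auto
    have zz: "{i. 2^i \<le> (1::nat) \<and> \<not> bt 1 i} = {}"
    proof -
      have "2^i \<le> (1::nat) \<Longrightarrow> i = 0" for i
        by (metis le_less_trans less_exp less_one not_gr0 not_le)
      moreover have "bt 1 0" by (simp add: bt_0)
      ultimately show ?thesis by blast
    qed
    show ?thesis unfolding n1 zz by (simp add: count_zeros_def bd01)
  next
    case False
    then have n2: "2 \<le> n" by simp
    have fin: "finite {i. 2^i \<le> n div 2 \<and> \<not> bt (n div 2) i}"
    proof -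
      have "{i. 2^i \<le> n div 2 \<and> \<not> bt (n div 2) i} \<subseteq> {..<n}"
      proof
        fix i assume "i \<in> {i. 2^i \<le> n div 2 \<and> \<not> bt (n div 2) i}"
        then have "2^i \<le> n div 2" by simp
        moreover have "n div 2 \<le> n" by simp
        moreover have "i < 2^i" by (rule less_exp)
        ultimately have "i < n" by linarith
        then show "i \<in> {..<n}" by simp
      qed
      then show ?thesis using finite_subset by blast
    qed
    have "count_zeros n = count_zeros (n div 2) + (if even n then 1 else 0)"
      unfolding count_zeros_def using bd_step[OF n2] by (auto simp: even_iff_mod_2_eq_zero)
    also have "\<dots> = card {i. 2^i \<le> n div 2 \<and> \<not> bt (n div 2) i} + (if even n then 1 else 0)"
      using less n2 by simp
    also have "\<dots> = card {i. 2^i \<le> n \<and> \<not> bt n i}"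
    proof -
      have c: "card (Suc ` {i. 2^i \<le> n div 2 \<and> \<not> bt (n div 2) i}) = card {i. 2^i \<le> n div 2 \<and> \<not> bt (n div 2) i}"
        by (simp add: card_image)
      have "0 \<notin> Suc ` {i. 2^i \<le> n div 2 \<and> \<not> bt (n div 2) i}" by auto
      then show ?thesis unfolding zset_split[OF n2]
        using c fin by auto
    qed
    finally show ?thesis .
  qed
qed

definition ispow :: "nat \<Rightarrow> bool" where "ispow x \<longleftrightarrow> (\<exists>j. x = 2^j)"

lemma mod_Suc2: "(x::nat) mod 2^(Suc a) = x mod 2^a + (if bt x a then 2^a else 0)"
proof -
  have "x mod (2^a * 2) = 2^a * (x div 2^a mod 2) + x mod 2^a" by (rule mod_mult2_eq)
  moreover have "x div 2^a mod 2 = (if bt x a then 1 else 0)"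
    unfolding bt_def by (simp add: odd_iff_mod_2_eq_one even_iff_mod_2_eq_zero)
  ultimately show ?thesis by (simp add: mult.commute)
qed

lemma not_bt_big: "x < 2^i \<Longrightarrow> \<not> bt x i"
  using bt_le by fastforce

locale thr =
  fixes d p :: nat
  assumes d2: "2 \<le> d" and pl: "2^p \<le> d" and pu: "d < 2^Suc p"
begin

definition r where "r = d - 2^p"

lemma d_eq: "2^p + r = d" using pl unfolding r_def by simp
lemma r_lt: "r < 2^p" using pu d_eq by simp

lemma bt_r_d: "i < p \<Longrightarrow> bt r i = bt d i"
proof -
  assume ip: "i < p"
  have e: "(2::nat)^p = 2^(p-i) * 2^i" using ip by (simp add: power_add[symmetric])
  have hd: "d = r + 2^(p-i) * 2^i" using d_eq e by linarith
  have "(r + 2^(p-i) * 2^i) div 2^i = r div 2^i + 2^(p-i)" by simp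
  moreover have "d div 2^i = (r + 2^(p-i) * 2^i) div 2^i" by (subst hd[symmetric]) (rule refl)
  ultimately have "d div 2^i = r div 2^i + 2^(p-i)" by (rule trans[rotated])
  moreover have "even ((2::nat)^(p-i))" using ip by simp
  ultimately show ?thesis unfolding bt_def by simp
qed

lemma r_nbt: "p \<le> i \<Longrightarrow> \<not> bt r i"
proof -
  assume "p \<le> i"
  then have "(2::nat)^p \<le> 2^i" by (simp add: power_increasing)
  then show ?thesis using r_lt not_bt_big by (meson less_le_trans)
qed

definition A where "A = {a. 0 < a \<and> bt r (a-1) \<and> \<not> bt r a}"

lemma A_le: "a \<in> A \<Longrightarrow> 0 < a \<and> a \<le> p"
proof -
  assume a: "a \<in> A"
  then have "bt r (a-1)" "0 < a" unfolding A_def by auto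
  then have "\<not> p \<le> a - 1" using r_nbt by blast
  then show ?thesis using \<open>0 < a\<close> by simp
qed

lemma A_fin: "finite A"
proof -
  have "A \<subseteq> {..p}" using A_le by auto
  then show ?thesis using finite_subset by blast
qed

definition ones where "ones b a \<longleftrightarrow> (\<forall>j. b \<le> j \<and> j < a \<longrightarrow> bt r j)"

definition s where "s a = (LEAST b. ones b a)"

lemma s_props:
  assumes a: "a \<in> A"
  shows "s a < a" "ones (s a) a" "s a = 0 \<or> \<not> bt r (s a - 1)"
proof -
  have a0: "0 < a" "bt r (a-1)" using a unfolding A_def by auto
  have o: "ones (a-1) a" unfolding ones_def
  proof (intro allI impI)
    fix j assume "a - 1 \<le> j \<and> j < a"
    then have "j = a - 1" using a0(1) by linarith
    then show "bt r j" using a0 by simp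
  qed
  then show "ones (s a) a" unfolding s_def by (rule LeastI)
  have "s a \<le> a - 1" using o unfolding s_def by (rule Least_le)
  then show "s a < a" using a0 by simp
  show "s a = 0 \<or> \<not> bt r (s a - 1)"
  proof (rule ccontr)
    assume "\<not> (s a = 0 \<or> \<not> bt r (s a - 1))"
    then have h: "0 < s a" "bt r (s a - 1)" by auto
    have "ones (s a - 1) a"
      unfolding ones_def
    proof (intro allI impI)
      fix j assume j: "s a - 1 \<le> j \<and> j < a"
      show "bt r j"
      proof (cases "j = s a - 1")
        case True then show ?thesis using h by simp
      next
        case False then have "s a \<le> j" using j h(1) by linarith
        then show ?thesis using \<open>ones (s a) a\<close> j unfolding ones_def by simp
      qed
    qed
    then have "s a \<le> s a - 1" unfolding s_def by (rule Least_le)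
    then show False using h by simp
  qed
qed

lemma run: "b \<le> a \<Longrightarrow> ones b a \<Longrightarrow> r mod 2^a + 2^b = r mod 2^b + 2^a"
proof (induction a)
  case 0 then show ?case by simp
next
  case (Suc a)
  show ?case
  proof (cases "b = Suc a")
    case True then show ?thesis by simp
  next
    case False
    then have ba: "b \<le> a" using Suc.prems by simp
    have oa: "ones b a" using Suc.prems unfolding ones_def by simp
    have bta: "bt r a" using Suc.prems ba unfolding ones_def by simp
    have "r mod 2^Suc a = r mod 2^a + 2^a" using mod_Suc2[of r a] bta by simp
    then have "r mod 2^Suc a + 2^b = r mod 2^a + 2^a + 2^b" by simp
    also have "\<dots> = r mod 2^b + 2^a + 2^a" using Suc.IH[OF ba oa] by simp
    finally show ?thesis by simp
  qed
qed

lemma s_inj: "a \<in> A \<Longrightarrow> a' \<in> A \<Longrightarrow> s a = s a' \<Longrightarrow> a = a'"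
proof (rule ccontr)
  assume a: "a \<in> A" "a' \<in> A" "s a = s a'" "a \<noteq> a'"
  have key: "x \<in> A \<Longrightarrow> y \<in> A \<Longrightarrow> s x = s y \<Longrightarrow> x < y \<Longrightarrow> False" for x y
  proof -
    assume xy: "x \<in> A" "y \<in> A" "s x = s y" "x < y"
    have "s y \<le> x" using s_props(1)[OF xy(1)] xy(3) by simp
    then have "bt r x" using s_props(2)[OF xy(2)] xy(4) unfolding ones_def by simp
    moreover have "\<not> bt r x" using xy(1) unfolding A_def by simp
    ultimately show False by simp
  qed
  show False
  proof (cases "a < a'")
    case True then show ?thesis using key a by blast
  next
    case False then have "a' < a" using a(4) by simp
    then show ?thesis using key a by metis
  qed
qed

definition A' where "A' = {a \<in> A. r mod 2^a \<noteq> 2^(s a)}"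

definition Lp where "Lp a = (r mod 2^(s a), (2::nat)^a)"
definition Rp where "Rp a = (r mod 2^a, (2::nat)^(s a))"

definition M where "M = {(x, y). \<exists>a\<in>A'. (x = Lp a \<and> y = Rp a) \<or> (x = Rp a \<and> y = Lp a)}"

lemma A'A: "a \<in> A' \<Longrightarrow> a \<in> A" unfolding A'_def by simp

lemma sum_LR: "a \<in> A \<Longrightarrow> fst (Lp a) + snd (Lp a) = fst (Rp a) + snd (Rp a)"
  unfolding Lp_def Rp_def using run[of "s a" a] s_props[of a] by simp

lemma Rp_pos: "a \<in> A \<Longrightarrow> 0 < r mod 2^a"
proof -
  assume a: "a \<in> A"
  have "(2::nat)^(s a) < 2^a" using s_props(1)[OF a] by simp
  moreover have "r mod 2^(s a) < 2^(s a)" by simp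
  moreover have "r mod 2^(s a) + 2^a = r mod 2^a + 2^(s a)"
    using sum_LR[OF a] unfolding Lp_def Rp_def by simp
  ultimately show ?thesis by linarith
qed

lemma M_sym: "(x, y) \<in> M \<Longrightarrow> (y, x) \<in> M" unfolding M_def by auto

lemma M_fun: "(x, y) \<in> M \<Longrightarrow> (x, z) \<in> M \<Longrightarrow> y = z"
proof -
  assume h: "(x, y) \<in> M" "(x, z) \<in> M"
  have LL: "Lp a = Lp b \<Longrightarrow> a = b" for a b unfolding Lp_def by simp
  have RR: "a \<in> A \<Longrightarrow> b \<in> A \<Longrightarrow> Rp a = Rp b \<Longrightarrow> a = b" for a b
    unfolding Rp_def using s_inj by simp
  have LR: "a \<in> A \<Longrightarrow> b \<in> A \<Longrightarrow> Lp a = Rp b \<Longrightarrow> False" for a b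
  proof -
    assume ab: "a \<in> A" "b \<in> A" "Lp a = Rp b"
    then have "a = s b" unfolding Lp_def Rp_def by simp
    then have "bt r a" using s_props[OF ab(2)] unfolding ones_def by simp
    then show False using ab(1) unfolding A_def by simp
  qed
  from h(1) obtain a where a: "a \<in> A'" "(x = Lp a \<and> y = Rp a) \<or> (x = Rp a \<and> y = Lp a)"
    unfolding M_def by auto
  from h(2) obtain b where b: "b \<in> A'" "(x = Lp b \<and> z = Rp b) \<or> (x = Rp b \<and> z = Lp b)"
    unfolding M_def by auto
  have aA: "a \<in> A" and bA: "b \<in> A" using a b A'A by auto
  show "y = z"
  proof (cases "x = Lp a")
    case xa: True
    show ?thesis
    proof (cases "x = Lp b")
      case True
      then have "a = b" using xa LL by simp
      then show ?thesis using a(2) b(2) xa True LR[OF aA aA] by auto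
    next
      case False
      then have "x = Rp b" using b(2) by auto
      then show ?thesis using xa LR[OF aA bA] by simp
    qed
  next
    case xa: False
    then have xr: "x = Rp a" "y = Lp a" using a(2) by auto
    show ?thesis
    proof (cases "x = Lp b")
      case True
      then show ?thesis using xr LR[OF bA aA] by simp
    next
      case False
      then have "x = Rp b" "z = Lp b" using b(2) by auto
      then have "a = b" using xr RR[OF aA bA] by simp
      then show ?thesis using xr \<open>z = Lp b\<close> by simp
    qed
  qed
qed

lemma M_the: "(x, y) \<in> M \<Longrightarrow> (THE q. (x, q) \<in> M) = y"
  using M_fun by blast

lemma M_dom: "(x, y) \<in> M \<Longrightarrow> snd x \<noteq> 0 \<and> fst x \<noteq> snd x \<and> x \<noteq> (0,1)"
proof -
  assume "(x, y) \<in> M"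
  then obtain a where a: "a \<in> A'" "x = Lp a \<or> x = Rp a" unfolding M_def by auto
  have aA: "a \<in> A" using a A'A by simp
  have sa: "s a < a" "0 < a" using s_props(1)[OF aA] A_le[OF aA] by auto
  show ?thesis
  proof (cases "x = Lp a")
    case True
    have lt1: "r mod 2^(s a) < 2^(s a)" by simp
    have lt2: "(2::nat)^(s a) < 2^a" using sa by simp
    have ne: "r mod 2^(s a) \<noteq> 2^a" using lt1 lt2 by linarith
    have n1: "(2::nat)^a \<noteq> 1" using sa by simp
    have n0: "(2::nat)^a \<noteq> 0" by simp
    have "(r mod 2^(s a), (2::nat)^a) \<noteq> (0,1)" using n1 by simp
    then have "r mod 2^(s a) \<noteq> 2^a" "(2::nat)^a \<noteq> 0" "(r mod 2^(s a), (2::nat)^a) \<noteq> (0,1)"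
      using ne n0 by auto
    then show ?thesis using True unfolding Lp_def by simp
  next
    case False
    then have x: "x = Rp a" using a by simp
    have "r mod 2^a \<noteq> 2^(s a)" using a(1) unfolding A'_def by simp
    moreover have "0 < r mod 2^a" using Rp_pos[OF aA] .
    ultimately show ?thesis using x unfolding Rp_def by auto
  qed
qed

lemma M_sum: "(x, y) \<in> M \<Longrightarrow> fst x + snd x = fst y + snd y"
proof -
  assume "(x, y) \<in> M"
  then obtain a where a: "a \<in> A'" "(x = Lp a \<and> y = Rp a) \<or> (x = Rp a \<and> y = Lp a)"
    unfolding M_def by auto
  have "a \<in> A" using a A'A by simp
  then show ?thesis using sum_LR[of a] a(2) by auto
qed

lemma ispow_half: "ispow x \<Longrightarrow> 2 \<le> x \<Longrightarrow> ispow (x div 2) \<and> 2 * (x div 2) = x"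
proof -
  assume "ispow x" "2 \<le> x"
  then obtain j where j: "x = 2^j" unfolding ispow_def by auto
  then have "j \<noteq> 0" using \<open>2 \<le> x\<close> by (cases j) auto
  then obtain k where k: "j = Suc k" by (cases j) auto
  then show ?thesis using j unfolding ispow_def by auto
qed

lemma ispow_pos: "ispow x \<Longrightarrow> 0 < x" unfolding ispow_def by auto

lemma ispow_dbl: "ispow x \<Longrightarrow> ispow (2 * x)" unfolding ispow_def by (auto intro: exI[of _ "Suc _"])

definition g :: "nat \<times> nat \<Rightarrow> nat \<times> nat" where
  "g pq = (if pq \<in> Domain M then (THE q. (pq, q) \<in> M)
    else if snd pq = 0 \<and> ispow (fst pq) \<and> 2 \<le> fst pq then (fst pq div 2, fst pq div 2)
    else if fst pq = snd pq \<and> ispow (fst pq) \<and> 2 * fst pq < d then (2 * fst pq, 0)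
    else if pq = (1,0) then (0,1)
    else if pq = (0,1) then (1,0)
    else pq)"

lemma g_M: "(x, y) \<in> M \<Longrightarrow> g x = y"
  unfolding g_def using M_the by (simp add: Domain.DomainI)

lemma g_split: "(x,0) \<notin> Domain M \<Longrightarrow> ispow x \<Longrightarrow> 2 \<le> x
   \<Longrightarrow> g (x,0) = (x div 2, x div 2)"
  unfolding g_def by simp

lemma g_merge: "(x,x) \<notin> Domain M \<Longrightarrow> ispow x \<Longrightarrow> 2 * x < d \<Longrightarrow> g (x,x) = (2 * x, 0)"
proof -
  assume h: "(x,x) \<notin> Domain M" "ispow x" "2 * x < d"
  have "x \<noteq> 0" using h(2) ispow_pos by fastforce
  then have c2: "(x = 0 \<and> ispow x \<and> 2 \<le> x) = False" by simp
  have c3: "(x = x \<and> ispow x \<and> 2 * x < d) = True" using h by simp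
  have c1: "((x,x) \<in> Domain M) = False" using h by simp
  show ?thesis unfolding g_def fst_conv snd_conv c1 c2 c3 if_False if_True by (rule refl)
qed

lemma g_10: "(1,0) \<notin> Domain M \<Longrightarrow> g (1,0) = (0,1)"
  unfolding g_def by simp

lemma g_01: "(0,1) \<notin> Domain M \<Longrightarrow> g (0,1) = (1,0)"
  unfolding g_def by simp

lemma g_id: "(x,y) \<notin> Domain M \<Longrightarrow> \<not> (y = 0 \<and> ispow x \<and> 2 \<le> x)
  \<Longrightarrow> \<not> (x = y \<and> ispow x \<and> 2 * x < d) \<Longrightarrow> (x,y) \<noteq> (1,0) \<Longrightarrow> (x,y) \<noteq> (0,1)
  \<Longrightarrow> g (x,y) = (x,y)"
proof -
  assume h: "(x,y) \<notin> Domain M" "\<not> (y = 0 \<and> ispow x \<and> 2 \<le> x)"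
    "\<not> (x = y \<and> ispow x \<and> 2 * x < d)" "(x,y) \<noteq> (1,0)" "(x,y) \<noteq> (0,1)"
  then have c: "((x,y) \<in> Domain M) = False" "(y = 0 \<and> ispow x \<and> 2 \<le> x) = False"
    "(x = y \<and> ispow x \<and> 2 * x < d) = False" "((x,y) = (1,0)) = False" "((x,y) = (0,1)) = False"
    by simp_all
  show ?thesis unfolding g_def fst_conv snd_conv c if_False by (rule refl)
qed

lemma notDom: "snd x = 0 \<or> fst x = snd x \<or> x = (0,1) \<Longrightarrow> x \<notin> Domain M"
  using M_dom by blast

lemma g_sum: "fst (g (x,y)) + snd (g (x,y)) = x + y"
proof (cases "(x,y) \<in> Domain M")
  case True
  then obtain q where q: "((x,y), q) \<in> M" by auto
  then show ?thesis using g_M M_sum by fastforce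
next
  case nd: False
  show ?thesis
  proof (cases "y = 0 \<and> ispow x \<and> 2 \<le> x")
    case True
    then show ?thesis using g_split[of x] nd ispow_half[of x] by simp
  next
    case ns: False
    show ?thesis
    proof (cases "x = y \<and> ispow x \<and> 2 * x < d")
      case True
      then have xy: "x = y" "ispow x" "2 * x < d" by auto
      have nd': "(x,x) \<notin> Domain M" using nd xy(1) by simp
      have "g (x,x) = (2*x, 0)" by (rule g_merge[OF nd' xy(2) xy(3)])
      then show ?thesis using xy(1) by simp
    next
      case nm: False
      show ?thesis
      proof (cases "(x,y) = (1,0) \<or> (x,y) = (0,1)")
        case True
        then show ?thesis using nd g_10 g_01 by auto
      next
        case False
        then show ?thesis using g_id[OF nd ns nm] by simp
      qed
    qed
  qed
qed

lemma g_inv: "x + y < d \<Longrightarrow> g (g (x,y)) = (x,y)"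
proof (cases "(x,y) \<in> Domain M")
  case True
  then obtain q where q: "((x,y), q) \<in> M" by auto
  then show ?thesis using g_M M_sym by metis
next
  case nd: False
  assume lt: "x + y < d"
  show ?thesis
  proof (cases "y = 0 \<and> ispow x \<and> 2 \<le> x")
    case True
    define h where "h = x div 2"
    have hh: "ispow h" "2 * h = x" using ispow_half True unfolding h_def by auto
    have g1: "g (x,y) = (h, h)" using g_split[of x] nd True unfolding h_def by simp
    have "(h, h) \<notin> Domain M" using notDom by simp
    then have "g (h, h) = (2 * h, 0)" using g_merge[of h] hh lt True by simp
    then show ?thesis using g1 hh True by simp
  next
    case ns: False
    show ?thesis
    proof (cases "x = y \<and> ispow x \<and> 2 * x < d")
      case True
      then have x0: "x \<noteq> 0" using ispow_pos by fastforce
      from True have xy: "x = y" "ispow x" "2 * x < d" by auto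
      have nd': "(x,x) \<notin> Domain M" using nd xy(1) by simp
      have "g (x,x) = (2*x, 0)" by (rule g_merge[OF nd' xy(2) xy(3)])
      then have g1: "g (x,y) = (2 * x, 0)" using xy(1) by simp
      have "(2 * x, 0) \<notin> Domain M" using notDom by simp
      moreover have "2 \<le> 2 * x" using x0 by simp
      moreover have "ispow (2 * x)" using ispow_dbl xy(2) by simp
      ultimately have "g (2 * x, 0) = (2 * x div 2, 2 * x div 2)"
        using g_split[of "2 * x"] by blast
      then have "g (2 * x, 0) = (x, x)" by simp
      then show ?thesis using g1 True by simp
    next
      case nm: False
      have d10: "(1,0) \<notin> Domain M" using notDom by simp
      have d01: "(0,1) \<notin> Domain M" using notDom by simp
      show ?thesis
      proof (cases "(x,y) = (1,0) \<or> (x,y) = (0,1)")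
        case True
        then show ?thesis using g_10[OF d10] g_01[OF d01] by auto
      next
        case False
        then show ?thesis using g_id[OF nd ns nm] by simp
      qed
    qed
  qed
qed

end

lemma mod_ne0_div: "0 < (k::nat) \<Longrightarrow> x mod k \<noteq> 0 \<Longrightarrow> (x - 1) div k = x div k"
proof -
  assume k: "0 < k" and m: "x mod k \<noteq> 0"
  have e: "x = x mod k + x div k * k" by simp
  have "x - 1 = (x mod k - 1) + x div k * k" using m e by linarith
  then have "(x - 1) div k = x div k + (x mod k - 1) div k"
    using k by simp
  moreover have "x mod k - 1 < k" using k by (meson less_imp_diff_less mod_less_divisor)
  ultimately show ?thesis by simp
qed

lemma bt_mod_ne0: "bt x i \<Longrightarrow> i < a \<Longrightarrow> x mod 2^a \<noteq> 0"
proof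
  assume h: "bt x i" "i < a" "x mod 2^a = 0"
  then obtain q where q: "x = 2^a * q" by blast
  have e: "(2::nat)^a = 2^(a-i) * 2^i" using h(2) by (simp add: power_add[symmetric])
  have "x div 2^i = 2^(a-i) * q" unfolding q e by simp
  moreover have "even ((2::nat)^(a-i) * q)" using h(2) by simp
  ultimately show False using h(1) unfolding bt_def by simp
qed

lemma card_ins_le: "finite B \<Longrightarrow> card (insert x B) \<le> Suc (card B)"
  by (simp add: card_insert_if)

lemma log_ge: "2^p \<le> (d::nat) \<Longrightarrow> real p \<le> log 2 (real d)"
proof -
  assume h: "2^p \<le> d"
  have "(0::nat) < 2^p" by simp
  then have "0 < d" using h by linarith
  then have d0: "0 < real d" by simp
  have "(2::real) powr real p = 2^p" by (simp add: powr_realpow)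
  also have "\<dots> = real (2^p)" by simp
  also have "\<dots> \<le> real d" using h by (simp only: of_nat_le_iff)
  finally show ?thesis using le_log_iff[of 2 "real d" "real p"] d0 by simp
qed

context thr begin

definition P where "P = {x. ispow x \<and> x < d}"
definition W where "W = insert 0 ((\<lambda>a. r mod 2^a) ` A)"
definition Q where "Q = insert 0 (insert d (P \<union> W))"

lemma good: "j = 0 \<or> \<not> bt r (j-1) \<or> \<not> bt r j \<Longrightarrow> r mod 2^j \<in> W"
proof (induction j)
  case 0 then show ?case unfolding W_def by simp
next
  case (Suc k)
  show ?case
  proof (cases "bt r k")
    case False
    then have "r mod 2^Suc k = r mod 2^k" using mod_Suc2[of r k] by simp
    moreover have "r mod 2^k \<in> W" using Suc.IH False by simp
    ultimately show ?thesis by simp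
  next
    case True
    then have "\<not> bt r (Suc k)" using Suc.prems by simp
    then have "Suc k \<in> A" unfolding A_def using True by simp
    then have "r mod 2^(Suc k) \<in> (\<lambda>a. r mod 2^a) ` A" by (rule imageI)
    then show ?thesis unfolding W_def by blast
  qed
qed

lemma A_pow_lt: "a \<in> A \<Longrightarrow> 2^a < d"
proof -
  assume a: "a \<in> A"
  have ap: "0 < a" "a \<le> p" using A_le[OF a] by auto
  show ?thesis
  proof (cases "a < p")
    case True
    then have "(2::nat)^a < 2^p" by simp
    then show ?thesis using pl by linarith
  next
    case False
    then have "a = p" using ap by simp
    have "bt r (a-1)" using a unfolding A_def by simp
    then have "2^(a-1) \<le> r" by (rule bt_le)
    moreover have "(0::nat) < 2^(a-1)" by simp
    ultimately have "0 < r" by linarith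
    then show ?thesis using d_eq \<open>a = p\<close> by simp
  qed
qed

lemma W_lt: "x \<in> W \<Longrightarrow> x < d"
proof -
  assume "x \<in> W"
  then have "x \<le> r" unfolding W_def by auto
  then show ?thesis using d_eq r_lt by simp
qed

lemma P_in: "ispow x \<Longrightarrow> x < d \<Longrightarrow> x \<in> Q" unfolding Q_def P_def by simp
lemma W_in: "x \<in> W \<Longrightarrow> x \<in> Q" unfolding Q_def by simp
lemma zero_Q: "0 \<in> Q" unfolding Q_def by simp
lemma d_Q: "d \<in> Q" unfolding Q_def by simp
lemma one_Q: "1 \<in> Q" using P_in[of 1] d2 unfolding ispow_def by (simp add: exI[of _ 0])

lemma Q_le: "x \<in> Q \<Longrightarrow> x \<le> d"
proof -
  assume "x \<in> Q"
  then have "x = 0 \<or> x = d \<or> x \<in> P \<or> x \<in> W" unfolding Q_def by auto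
  then show ?thesis using W_lt[of x] unfolding P_def by auto
qed

lemma M_Q: "(u, v) \<in> M \<Longrightarrow> fst u \<in> Q \<and> snd u \<in> Q"
proof -
  assume "(u, v) \<in> M"
  then obtain a where a: "a \<in> A'" "u = Lp a \<or> u = Rp a" unfolding M_def by auto
  have aA: "a \<in> A" using a A'A by simp
  have "ispow ((2::nat)^a)" unfolding ispow_def by auto
  then have p1: "(2::nat)^a \<in> Q" using P_in A_pow_lt[OF aA] by simp
  have "(2::nat)^(s a) < 2^a" using s_props(1)[OF aA] by simp
  then have "(2::nat)^(s a) < d" using A_pow_lt[OF aA] by linarith
  moreover have "ispow ((2::nat)^(s a))" unfolding ispow_def by auto
  ultimately have p2: "(2::nat)^(s a) \<in> Q" using P_in by simp
  have w1: "r mod 2^a \<in> Q" using W_in aA unfolding W_def by simp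
  have w2: "r mod 2^(s a) \<in> Q" using W_in good s_props(3)[OF aA] by blast
  show ?thesis using a(2) p1 p2 w1 w2 unfolding Lp_def Rp_def by auto
qed

lemma g_Q: "x \<in> Q \<Longrightarrow> y \<in> Q \<Longrightarrow> x + y < d \<Longrightarrow> fst (g (x,y)) \<in> Q \<and> snd (g (x,y)) \<in> Q"
proof -
  assume xQ: "x \<in> Q" and yQ: "y \<in> Q" and lt: "x + y < d"
  show ?thesis
  proof (cases "(x,y) \<in> Domain M")
    case True
    then obtain q where q: "((x,y), q) \<in> M" by auto
    then have "g (x,y) = q" by (rule g_M)
    moreover have "(q, (x,y)) \<in> M" using q M_sym by simp
    ultimately show ?thesis using M_Q by simp
  next
    case nd: False
    show ?thesis
    proof (cases "y = 0 \<and> ispow x \<and> 2 \<le> x")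
      case True
      then have "g (x,y) = (x div 2, x div 2)" using g_split[of x] nd by simp
      moreover have "ispow (x div 2)" "x div 2 < d" using ispow_half True lt by auto
      ultimately show ?thesis using P_in by simp
    next
      case ns: False
      show ?thesis
      proof (cases "x = y \<and> ispow x \<and> 2 * x < d")
        case True
        then have xy: "x = y" "ispow x" "2 * x < d" by auto
        have nd': "(x,x) \<notin> Domain M" using nd xy(1) by simp
        have "g (x,x) = (2*x, 0)" by (rule g_merge[OF nd' xy(2) xy(3)])
        moreover have "2 * x \<in> Q" using P_in ispow_dbl xy by simp
        ultimately show ?thesis using xy(1) zero_Q by simp
      next
        case nm: False
        have d10: "(1,0) \<notin> Domain M" using notDom by simp
        have d01: "(0,1) \<notin> Domain M" using notDom by simp
        show ?thesis
        proof (cases "(x,y) = (1,0) \<or> (x,y) = (0,1)")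
          case True
          then show ?thesis using g_10[OF d10] g_01[OF d01] one_Q zero_Q by auto
        next
          case False
          then show ?thesis using g_id[OF nd ns nm] xQ yQ by simp
        qed
      qed
    qed
  qed
qed

lemma P_sub: "P \<subseteq> (\<lambda>j. 2^j) ` {..p}"
proof
  fix x assume "x \<in> P"
  then obtain j where j: "x = 2^j" "x < d" unfolding P_def ispow_def by auto
  then have "(2::nat)^j < 2^Suc p" using pu by linarith
  then have "j < Suc p" by (rule power_less_imp_less_exp[rotated]) simp
  then have "j \<le> p" by simp
  then show "x \<in> (\<lambda>j. 2^j) ` {..p}" using j by auto
qed

lemma P_fin: "finite P" using P_sub finite_subset by blast
lemma W_fin: "finite W" unfolding W_def using A_fin by simp
lemma Q_fin: "finite Q" unfolding Q_def using P_fin W_fin by simp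

lemma card_P: "card P \<le> Suc p"
proof -
  have "card P \<le> card ((\<lambda>j. (2::nat)^j) ` {..p})" using P_sub by (simp add: card_mono)
  also have "\<dots> \<le> card {..p}" by (rule card_image_le) simp
  finally show ?thesis by simp
qed

lemma card_W: "card W \<le> Suc (card A)"
proof -
  have "card W \<le> Suc (card ((\<lambda>a. r mod 2^a) ` A))"
    unfolding W_def using A_fin by (simp add: card_ins_le)
  moreover have "card ((\<lambda>a. r mod 2^a) ` A) \<le> card A" using A_fin by (rule card_image_le)
  ultimately show ?thesis by simp
qed

lemma card_Q: "card Q \<le> p + 4 + card A"
proof -
  have "card Q \<le> Suc (card (insert d (P \<union> W)))"
    unfolding Q_def using P_fin W_fin by (simp add: card_ins_le)
  moreover have "card (insert d (P \<union> W)) \<le> Suc (card (P \<union> W))"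
    using P_fin W_fin by (simp add: card_ins_le)
  moreover have "card (P \<union> W) \<le> card P + card W" by (rule card_Un_le)
  ultimately show ?thesis using card_P card_W by simp
qed

lemma card_A_ones: "card A \<le> count_ones d"
proof -
  have inj: "inj_on (\<lambda>a. a - 1) A"
  proof (rule inj_onI)
    fix a b assume "a \<in> A" "b \<in> A" "a - 1 = b - 1"
    then have "0 < a" "0 < b" "a - 1 = b - 1" using A_le[of a] A_le[of b] by auto
    then show "a = b" by linarith
  qed
  have sub: "(\<lambda>a. a - 1) ` A \<subseteq> {i. bt d i}"
  proof
    fix i assume "i \<in> (\<lambda>a. a - 1) ` A"
    then obtain a where a: "a \<in> A" "i = a - 1" by auto
    then have "bt r i" "i < p" using A_le[OF a(1)] unfolding A_def by auto
    then show "i \<in> {i. bt d i}" using bt_r_d by simp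
  qed
  have "card A = card ((\<lambda>a. a - 1) ` A)" using inj by (simp add: card_image)
  also have "\<dots> \<le> card {i. bt d i}" using sub bt_fin by (rule card_mono[rotated])
  finally show ?thesis using count_ones_eq by simp
qed

lemma card_A_zeros: "card A \<le> Suc (count_zeros (d - 1))"
proof -
  let ?Z = "{i. 2^i \<le> d - 1 \<and> \<not> bt (d - 1) i}"
  have finZ: "finite ?Z"
  proof -
    have "?Z \<subseteq> {..<d}"
    proof
      fix i assume "i \<in> ?Z"
      then have "2^i \<le> d - 1" by simp
      moreover have "i < 2^i" by (rule less_exp)
      ultimately have "i < d" by linarith
      then show "i \<in> {..<d}" by simp
    qed
    then show ?thesis using finite_subset by blast
  qed
  have sub: "A - {p} \<subseteq> ?Z"
  proof
    fix a assume a: "a \<in> A - {p}"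
    then have aA: "a \<in> A" and ap: "a < p" using A_le by force+
    have a0: "0 < a" using A_le[OF aA] by simp
    have "(2::nat)^a < 2^p" using ap by simp
    then have c1: "2^a \<le> d - 1" using pl by linarith
    have "bt r (a-1)" "\<not> bt r a" using aA unfolding A_def by auto
    then have "bt d (a-1)" "\<not> bt d a" using bt_r_d ap by auto
    then have "d mod 2^a \<noteq> 0" using bt_mod_ne0 a0 by simp
    then have "(d - 1) div 2^a = d div 2^a" using mod_ne0_div by simp
    then have "\<not> bt (d - 1) a" using \<open>\<not> bt d a\<close> unfolding bt_def by simp
    then show "a \<in> ?Z" using c1 by simp
  qed
  have "card (A - {p}) \<le> card ?Z" using sub finZ by (rule card_mono[rotated])
  also have "\<dots> = count_zeros (d - 1)" using count_zeros_eq[of "d-1"] d2 by simp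
  finally have "card (A - {p}) \<le> count_zeros (d - 1)" .
  moreover have "card A - 1 \<le> card (A - {p})"
    using A_fin by (simp add: card_Diff_singleton_if)
  ultimately show ?thesis by simp
qed

lemma card_bound: "real (card Q) \<le> log 2 (real d) + real (min (count_ones d) (count_zeros (d - 1))) + 5"
proof -
  have "card Q \<le> p + 5 + min (count_ones d) (count_zeros (d - 1))"
    using card_Q card_A_ones card_A_zeros by simp
  then have "real (card Q) \<le> real p + 5 + real (min (count_ones d) (count_zeros (d - 1)))"
    by linarith
  then show ?thesis using log_ge[OF pl] by linarith
qed

end

lemma sum_two: "finite S \<Longrightarrow> i \<in> S \<Longrightarrow> j \<in> S \<Longrightarrow> i \<noteq> j \<Longrightarrow>
  sum (f::nat \<Rightarrow> nat) S = f i + f j + sum f (S - {i, j})"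
proof -
  assume h: "finite S" "i \<in> S" "j \<in> S" "i \<noteq> j"
  have "sum f S = f i + sum f (S - {i})" using h by (simp add: sum.remove)
  moreover have "sum f (S - {i}) = f j + sum f (S - {i} - {j})" using h by (simp add: sum.remove)
  moreover have "S - {i} - {j} = S - {i, j}" by auto
  ultimately show ?thesis by simp
qed

lemma sum_upd2: "finite S \<Longrightarrow> i \<in> S \<Longrightarrow> j \<in> S \<Longrightarrow> i \<noteq> j \<Longrightarrow>
  sum (C(i := a, j := b)) S + C i + C j = sum (C::nat \<Rightarrow> nat) S + a + b"
proof -
  assume h: "finite S" "i \<in> S" "j \<in> S" "i \<noteq> j"
  have "sum (C(i := a, j := b)) S = (C(i := a, j := b)) i + (C(i := a, j := b)) j + sum (C(i := a, j := b)) (S - {i, j})"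
    using sum_two[OF h] by blast
  moreover have "sum (C(i := a, j := b)) (S - {i, j}) = sum C (S - {i, j})"
    by (rule sum.cong) auto
  moreover have "sum C S = C i + C j + sum C (S - {i, j})" using sum_two[OF h] by blast
  ultimately show ?thesis using h(4) by simp
qed

lemma sum_ones: "a + m \<le> Suc n \<Longrightarrow> (\<Sum>i\<in>{a..n}. if i < a + m then 1 else (0::nat)) = m"
proof -
  assume h: "a + m \<le> Suc n"
  have "(\<Sum>i\<in>{a..n}. if i < a + m then 1 else (0::nat)) = sum (\<lambda>_. 1) {i\<in>{a..n}. i < a + m}"
    using sum.inter_filter[of "{a..n}" "\<lambda>_. 1::nat" "\<lambda>i. i < a + m"] by simp
  also have "{i\<in>{a..n}. i < a + m} = {a..<a+m}" using h by auto
  finally show ?thesis by simp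
qed

context thr begin

definition delta :: "nat \<Rightarrow> nat \<Rightarrow> (nat \<times> nat) set" where
  "delta x y = (if d \<le> x + y then {(d,d)} else {g (x,y)})"

definition rstep :: "nat \<Rightarrow> (nat \<Rightarrow> nat) \<Rightarrow> (nat \<Rightarrow> nat) \<Rightarrow> bool" where
  "rstep n C D \<longleftrightarrow> (\<exists>i j. i \<in> {1..n} \<and> j \<in> {1..n} \<and> i \<noteq> j \<and> C i + C j < d \<and>
      D = C(i := fst (g (C i, C j)), j := snd (g (C i, C j))))"

lemma rstep_I: "i \<in> {1..n} \<Longrightarrow> j \<in> {1..n} \<Longrightarrow> i \<noteq> j \<Longrightarrow> C i + C j < d \<Longrightarrow>
   g (C i, C j) = (a, b) \<Longrightarrow> rstep n C (C(i := a, j := b))"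
  unfolding rstep_def by (rule exI[of _ i], rule exI[of _ j]) simp

lemma rstep_tr: "rstep n C D \<Longrightarrow> transition delta n C D"
proof -
  assume "rstep n C D"
  then obtain i j where h: "i \<in> {1..n}" "j \<in> {1..n}" "i \<noteq> j" "C i + C j < d"
    "D = C(i := fst (g (C i, C j)), j := snd (g (C i, C j)))" unfolding rstep_def by blast
  have "(D i, D j) = g (C i, C j)" using h(3,5) by simp
  then have "(D i, D j) \<in> delta (C i) (C j)" using h(4) unfolding delta_def by simp
  moreover have "\<forall>k. k \<noteq> i \<and> k \<noteq> j \<longrightarrow> D k = C k" using h(5) by simp
  ultimately show ?thesis unfolding transition_def using h(1-3) by blast
qed

lemma rstep_sym: "rstep n C D \<Longrightarrow> rstep n D C"
proof -
  assume "rstep n C D"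
  then obtain i j where h: "i \<in> {1..n}" "j \<in> {1..n}" "i \<noteq> j" "C i + C j < d"
    "D = C(i := fst (g (C i, C j)), j := snd (g (C i, C j)))" unfolding rstep_def by blast
  have Dij: "D i = fst (g (C i, C j))" "D j = snd (g (C i, C j))" using h(3,5) by simp_all
  have s: "D i + D j = C i + C j" using Dij g_sum by simp
  have gg: "g (D i, D j) = (C i, C j)" using Dij g_inv[OF h(4)] by simp
  have "C = D(i := C i, j := C j)" using h(5) by (simp add: fun_eq_iff)
  then show ?thesis unfolding rstep_def using h(1-4) s gg
    by (metis fst_conv snd_conv)
qed

lemma rstar_sym: "(rstep n)\<^sup>*\<^sup>* C D \<Longrightarrow> (rstep n)\<^sup>*\<^sup>* D C"
proof (induction rule: rtranclp_induct)
  case base then show ?case by simp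
next
  case (step B D)
  then show ?case using rstep_sym converse_rtranclp_into_rtranclp by metis
qed

lemma rstar_reach: "(rstep n)\<^sup>*\<^sup>* C D \<Longrightarrow> reachable delta n C D"
  unfolding reachable_def
proof (induction rule: rtranclp_induct)
  case base then show ?case by simp
next
  case (step B D)
  then show ?case using rstep_tr rtranclp.rtrancl_into_rtrancl by metis
qed

definition PC :: "nat \<Rightarrow> nat \<Rightarrow> (nat \<Rightarrow> nat) \<Rightarrow> nat \<Rightarrow> bool" where
  "PC n s0 C c \<longleftrightarrow> (\<forall>i\<in>{s0..n}. C i = 0 \<or> (ispow (C i) \<and> C i < d)) \<and>
     sum C {s0..n} = c \<and> c \<le> card {s0..n}"

lemma phase1:
  assumes "1 \<le> s0" "PC n s0 C c"
  shows "\<exists>D. (rstep n)\<^sup>*\<^sup>* C D \<and> (\<forall>i. i \<notin> {s0..n} \<longrightarrow> D i = C i) \<and>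
     (\<forall>i\<in>{s0..n}. D i \<le> 1) \<and> sum D {s0..n} = c"
  using assms(2)
proof (induction "card {i\<in>{s0..n}. C i = 0}" arbitrary: C rule: less_induct)
  case less
  let ?S = "{s0..n}"
  show ?case
  proof (cases "\<forall>i\<in>?S. C i \<le> 1")
    case True
    then show ?thesis using less.prems unfolding PC_def by blast
  next
    case False
    then obtain i where i: "i \<in> ?S" "2 \<le> C i" by (auto simp: not_le)
    have "C i = 0 \<or> (ispow (C i) \<and> C i < d)" using less.prems i(1) unfolding PC_def by blast
    then have ip: "ispow (C i)" "C i < d" using i(2) by auto
    have "\<exists>j\<in>?S. C j = 0"
    proof (rule ccontr)
      assume "\<not> (\<exists>j\<in>?S. C j = 0)"
      then have pos: "\<forall>k\<in>?S. 1 \<le> C k" by (simp add: Suc_le_eq)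
      have "sum C ?S = C i + sum C (?S - {i})" using i(1) by (simp add: sum.remove)
      moreover have "sum (\<lambda>_. 1::nat) (?S - {i}) \<le> sum C (?S - {i})"
        using pos by (intro sum_mono) auto
      moreover have "sum (\<lambda>_. 1::nat) (?S - {i}) = card ?S - 1" using i(1) by simp
      moreover have "card ?S \<ge> 1" using i(1) by (simp add: card_gt_0_iff Suc_le_eq)
      ultimately have "sum C ?S > card ?S" using i(2) by linarith
      then show False using less.prems unfolding PC_def by simp
    qed
    then obtain j where j: "j \<in> ?S" "C j = 0" by blast
    have ij: "i \<noteq> j" using i j by auto
    let ?h = "C i div 2"
    have hh: "ispow ?h" "2 * ?h = C i" using ispow_half[OF ip(1) i(2)] by auto
    have nd: "(C i, 0) \<notin> Domain M" using notDom by simp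
    have gs: "g (C i, C j) = (?h, ?h)" using g_split[OF nd ip(1) i(2)] j(2) by simp
    let ?C' = "C(i := ?h, j := ?h)"
    have S1: "?S \<subseteq> {1..n}" using assms(1) by auto
    have st: "rstep n C ?C'" using rstep_I[OF _ _ ij _ gs] i(1) j S1 ip(2) by auto
    have h0: "?h \<noteq> 0" using hh(1) ispow_pos by fastforce
    have PC': "PC n s0 ?C' c"
    proof -
      have "\<forall>k\<in>?S. ?C' k = 0 \<or> (ispow (?C' k) \<and> ?C' k < d)"
        using less.prems hh ip(2) unfolding PC_def by auto
      moreover have "sum ?C' ?S = sum C ?S"
        using sum_upd2[of ?S i j C ?h ?h] i(1) j ij hh(2) by simp
      ultimately show ?thesis using less.prems unfolding PC_def by simp
    qed
    have zsub: "{k\<in>?S. ?C' k = 0} \<subset> {k\<in>?S. C k = 0}"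
    proof
      show "{k\<in>?S. ?C' k = 0} \<subseteq> {k\<in>?S. C k = 0}" using h0 by auto
      show "{k\<in>?S. ?C' k = 0} \<noteq> {k\<in>?S. C k = 0}" using j h0 by auto
    qed
    have "card {k\<in>?S. ?C' k = 0} < card {k\<in>?S. C k = 0}"
      using zsub by (rule psubset_card_mono[rotated]) simp
    from less.hyps[OF this PC'] obtain D where D: "(rstep n)\<^sup>*\<^sup>* ?C' D"
      "\<forall>k. k \<notin> ?S \<longrightarrow> D k = ?C' k" "\<forall>k\<in>?S. D k \<le> 1" "sum D ?S = c" by blast
    have "(rstep n)\<^sup>*\<^sup>* C D" using st D(1) by (rule converse_rtranclp_into_rtranclp)
    moreover have "\<forall>k. k \<notin> ?S \<longrightarrow> D k = C k" using D(2) i(1) j(1) by auto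
    ultimately show ?thesis using D by blast
  qed
qed

definition NF :: "nat \<Rightarrow> nat \<Rightarrow> (nat \<Rightarrow> nat) \<Rightarrow> nat \<Rightarrow> nat \<Rightarrow> nat" where
  "NF n s0 C c = (\<lambda>i. if i \<in> {s0..n} then (if i < s0 + c then 1 else 0) else C i)"

lemma phase2:
  assumes "1 \<le> s0" "\<forall>i\<in>{s0..n}. C i \<le> 1" "sum C {s0..n} = c"
  shows "(rstep n)\<^sup>*\<^sup>* C (NF n s0 C c)"
  using assms(2,3)
proof (induction "sum (\<lambda>i. C i * i) {s0..n}" arbitrary: C rule: less_induct)
  case less
  let ?S = "{s0..n}"
  have S1: "?S \<subseteq> {1..n}" using assms(1) by auto
  show ?case
  proof (cases "\<exists>i\<in>?S. \<exists>i'\<in>?S. i < i' \<and> C i = 0 \<and> C i' = 1")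
    case True
    then obtain i i' where ii: "i \<in> ?S" "i' \<in> ?S" "i < i'" "C i = 0" "C i' = 1" by blast
    have ne: "i \<noteq> i'" using ii by simp
    have gs: "g (C i, C i') = (1, 0)" using ii g_01 notDom by simp
    let ?C' = "C(i := 1, i' := 0)"
    have st: "rstep n C ?C'" using rstep_I[OF _ _ ne _ gs] ii S1 d2 by auto
    have v': "\<forall>k\<in>?S. ?C' k \<le> 1" using less.prems by simp
    have s': "sum ?C' ?S = c" using sum_upd2[of ?S i i' C 1 0] ii less.prems by simp
    have m: "sum (\<lambda>k. ?C' k * k) ?S < sum (\<lambda>k. C k * k) ?S"
    proof -
      have "sum (\<lambda>k. ?C' k * k) ?S = ?C' i * i + ?C' i' * i' + sum (\<lambda>k. ?C' k * k) (?S - {i, i'})"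
        using sum_two[of ?S i i'] ii by simp
      moreover have "sum (\<lambda>k. C k * k) ?S = C i * i + C i' * i' + sum (\<lambda>k. C k * k) (?S - {i, i'})"
        using sum_two[of ?S i i'] ii by simp
      moreover have "sum (\<lambda>k. ?C' k * k) (?S - {i, i'}) = sum (\<lambda>k. C k * k) (?S - {i, i'})"
        by (rule sum.cong) auto
      ultimately show ?thesis using ii ne by simp
    qed
    have "NF n s0 ?C' c = NF n s0 C c" unfolding NF_def using ii by (auto simp: fun_eq_iff)
    moreover have "(rstep n)\<^sup>*\<^sup>* ?C' (NF n s0 ?C' c)" using less.hyps[OF m v' s'] .
    ultimately show ?thesis using st converse_rtranclp_into_rtranclp by metis
  next
    case False
    have O: "sum C ?S = card {k\<in>?S. C k = 1}"
    proof -
      have "sum C ?S = (\<Sum>k\<in>?S. if C k = 1 then 1 else 0)"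
        using less.prems(1) by (intro sum.cong) (auto simp: le_Suc_eq)
      also have "\<dots> = card {k\<in>?S. C k = 1}" by (simp add: sum.inter_filter[symmetric])
      finally show ?thesis .
    qed
    have "C = NF n s0 C c"
    proof
      fix k
      show "C k = NF n s0 C c k"
      proof (cases "k \<in> ?S")
        case nS: False
        have "NF n s0 C c k = C k" unfolding NF_def using nS by (simp del: atLeastAtMost_iff)
        then show ?thesis by simp
      next
        case kS: True
        show ?thesis
        proof (cases "k < s0 + c")
          case True
          have "C k = 1"
          proof (rule ccontr)
            assume "C k \<noteq> 1"
            then have ck: "C k = 0" using less.prems(1) kS by (metis le_Suc_eq le_zero_eq One_nat_def)
            have "{k'\<in>?S. C k' = 1} \<subseteq> {s0..<k}"
            proof
              fix k' assume k': "k' \<in> {k'\<in>?S. C k' = 1}"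
              have k'S: "k' \<in> ?S" "C k' = 1" using k' by auto
              have "\<not> k < k'"
              proof
                assume "k < k'"
                then show False using False kS k'S ck by blast
              qed
              moreover have "k' \<noteq> k" using k' ck by auto
              ultimately show "k' \<in> {s0..<k}" using k' by auto
            qed
            then have "card {k'\<in>?S. C k' = 1} \<le> k - s0"
              using card_mono[of "{s0..<k}"] by fastforce
            moreover have "s0 \<le> k" using kS by simp
            ultimately show False using O less.prems(2) True by linarith
          qed
          moreover have "NF n s0 C c k = 1" unfolding NF_def using kS True by simp
          ultimately show ?thesis by simp
        next
          case nt: False
          have "C k = 0"
          proof (rule ccontr)
            assume "C k \<noteq> 0"
            then have ck: "C k = 1" using less.prems(1) kS by (metis le_Suc_eq le_zero_eq One_nat_def)
            have "{s0..k} \<subseteq> {k'\<in>?S. C k' = 1}"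
            proof
              fix k' assume k': "k' \<in> {s0..k}"
              then have k'S: "k' \<in> ?S" using kS by auto
              have "C k' = 1"
              proof (rule ccontr)
                assume "C k' \<noteq> 1"
                then have "C k' = 0" using less.prems(1) k'S by (metis le_Suc_eq le_zero_eq One_nat_def)
                moreover have "k' \<noteq> k" using \<open>C k' \<noteq> 1\<close> ck by auto
                moreover have "k' < k" using k' \<open>k' \<noteq> k\<close> by simp
                ultimately show False using False k'S kS ck by blast
              qed
              then show "k' \<in> {k'\<in>?S. C k' = 1}" using k'S by simp
            qed
            then have "card {s0..k} \<le> card {k'\<in>?S. C k' = 1}"
              by (rule card_mono[rotated]) simp
            moreover have "card {s0..k} = Suc k - s0" by simp
            moreover have "s0 \<le> k" using kS by simp
            ultimately show False using O less.prems(2) nt by linarith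
          qed
          moreover have "NF n s0 C c k = 0" unfolding NF_def using kS nt by simp
          ultimately show ?thesis by simp
        qed
      qed
    qed
    then show ?thesis by simp
  qed
qed

lemma G:
  assumes "1 \<le> s0" "PC n s0 C c" "PC n s0 D c" "\<forall>i. i \<notin> {s0..n} \<longrightarrow> C i = D i"
  shows "(rstep n)\<^sup>*\<^sup>* C D"
proof -
  obtain C1 where C1: "(rstep n)\<^sup>*\<^sup>* C C1" "\<forall>i. i \<notin> {s0..n} \<longrightarrow> C1 i = C i"
     "\<forall>i\<in>{s0..n}. C1 i \<le> 1" "sum C1 {s0..n} = c" using phase1[OF assms(1,2)] by blast
  obtain D1 where D1: "(rstep n)\<^sup>*\<^sup>* D D1" "\<forall>i. i \<notin> {s0..n} \<longrightarrow> D1 i = D i"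
     "\<forall>i\<in>{s0..n}. D1 i \<le> 1" "sum D1 {s0..n} = c" using phase1[OF assms(1,3)] by blast
  have e: "NF n s0 C1 c = NF n s0 D1 c" unfolding NF_def using C1(2) D1(2) assms(4)
    by (auto simp: fun_eq_iff)
  have "(rstep n)\<^sup>*\<^sup>* C (NF n s0 C1 c)" using C1(1) phase2[OF assms(1) C1(3,4)] by simp
  moreover have "(rstep n)\<^sup>*\<^sup>* (NF n s0 D1 c) D"
    using rstar_sym D1(1) phase2[OF assms(1) D1(3,4)] rtranclp_trans by metis
  ultimately show ?thesis using e by simp
qed

end

context thr begin

definition cfg :: "nat \<Rightarrow> nat \<Rightarrow> nat \<Rightarrow> nat \<Rightarrow> nat" where
  "cfg n w u = (\<lambda>i. if i = 1 then w else if i = 2 then u else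
     if 3 \<le> i \<and> i \<le> n then (if i < 3 + (n - w - u) then 1 else 0) else 1)"

lemma cfg_12: "cfg n w u 1 = w" "cfg n w u 2 = u" unfolding cfg_def by simp_all

lemma cfg_other: "i \<noteq> 1 \<Longrightarrow> i \<noteq> 2 \<Longrightarrow> cfg n w u i =
   (if 3 \<le> i \<and> i \<le> n then (if i < 3 + (n - w - u) then 1 else 0) else 1)"
  unfolding cfg_def by simp

lemma cfg_out: "2 \<le> n \<Longrightarrow> i \<notin> {1..n} \<Longrightarrow> cfg n w u i = 1"
  unfolding cfg_def by auto

lemma cfg_sum3: "2 \<le> n \<Longrightarrow> w + u \<le> n \<Longrightarrow> 2 \<le> w + u \<Longrightarrow> sum (cfg n w u) {3..n} = n - w - u"
proof -
  assume h: "2 \<le> n" "w + u \<le> n" "2 \<le> w + u"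
  have "sum (cfg n w u) {3..n} = (\<Sum>i\<in>{3..n}. if i < 3 + (n - w - u) then 1 else 0)"
    unfolding cfg_def by (intro sum.cong) auto
  also have "\<dots> = n - w - u" using h by (intro sum_ones) simp
  finally show ?thesis .
qed

lemma cfg_sum2: "2 \<le> n \<Longrightarrow> w + u \<le> n \<Longrightarrow> 2 \<le> w + u \<Longrightarrow> sum (cfg n w u) {2..n} = n - w"
proof -
  assume h: "2 \<le> n" "w + u \<le> n" "2 \<le> w + u"
  have "sum (cfg n w u) {2..n} = cfg n w u 2 + sum (cfg n w u) {Suc 2..n}"
    using h(1) by (rule sum.atLeast_Suc_atMost)
  then show ?thesis using cfg_sum3[OF h] cfg_12 h by (simp add: numeral_3_eq_3)
qed

lemma cfg_sum1: "2 \<le> n \<Longrightarrow> w + u \<le> n \<Longrightarrow> 2 \<le> w + u \<Longrightarrow> sum (cfg n w u) {1..n} = n"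
proof -
  assume h: "2 \<le> n" "w + u \<le> n" "2 \<le> w + u"
  have "sum (cfg n w u) {1..n} = cfg n w u 1 + sum (cfg n w u) {Suc 1..n}"
    using h(1) by (intro sum.atLeast_Suc_atMost) simp
  then show ?thesis using cfg_sum2[OF h] cfg_12 h by (simp add: numeral_2_eq_2)
qed

lemma cfg_vals: "i \<in> {3..n} \<Longrightarrow> cfg n w u i = 0 \<or> (ispow (cfg n w u i) \<and> cfg n w u i < d)"
proof -
  assume "i \<in> {3..n}"
  then have "cfg n w u i = 0 \<or> cfg n w u i = 1" unfolding cfg_def by auto
  moreover have "ispow 1" unfolding ispow_def by (rule exI[of _ 0]) simp
  ultimately show ?thesis using d2 by auto
qed

lemma cfg_PC2:
  assumes "2 \<le> n" "w + u \<le> n" "2 \<le> w + u" "1 \<le> w" "u = 0 \<or> (ispow u \<and> u < d)"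
  shows "PC n 2 (cfg n w u) (n - w)"
proof -
  have "\<forall>i\<in>{2..n}. cfg n w u i = 0 \<or> (ispow (cfg n w u i) \<and> cfg n w u i < d)"
  proof
    fix i assume i: "i \<in> {2..n}"
    show "cfg n w u i = 0 \<or> (ispow (cfg n w u i) \<and> cfg n w u i < d)"
    proof (cases "i = 2")
      case True then show ?thesis using assms(5) cfg_12 by simp
    next
      case False then have "i \<in> {3..n}" using i by auto
      then show ?thesis by (rule cfg_vals)
    qed
  qed
  moreover have "n - w \<le> card {2..n}" using assms by simp
  ultimately show ?thesis unfolding PC_def using cfg_sum2[OF assms(1-3)] by simp
qed

lemma cfg_PC1:
  assumes "2 \<le> n" "w + u \<le> n" "2 \<le> w + u" "w = 0 \<or> (ispow w \<and> w < d)" "u = 0 \<or> (ispow u \<and> u < d)"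
  shows "PC n 1 (cfg n w u) n"
proof -
  have "\<forall>i\<in>{1..n}. cfg n w u i = 0 \<or> (ispow (cfg n w u i) \<and> cfg n w u i < d)"
  proof
    fix i assume i: "i \<in> {1..n}"
    show "cfg n w u i = 0 \<or> (ispow (cfg n w u i) \<and> cfg n w u i < d)"
    proof (cases "i = 1 \<or> i = 2")
      case True then show ?thesis using assms(4,5) cfg_12 by auto
    next
      case False then have "i \<in> {3..n}" using i by auto
      then show ?thesis by (rule cfg_vals)
    qed
  qed
  then show ?thesis unfolding PC_def using cfg_sum1[OF assms(1-3)] by simp
qed

definition I1 :: "nat \<Rightarrow> nat" where "I1 = (\<lambda>_. 1)"

lemma I1_PC: "PC n 1 I1 n"
proof -
  have "ispow 1" unfolding ispow_def by (rule exI[of _ 0]) simp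
  then show ?thesis unfolding PC_def I1_def using d2 by simp
qed

lemma R0: "PC n 1 C n \<Longrightarrow> (\<forall>i. i \<notin> {1..n} \<longrightarrow> C i = 1) \<Longrightarrow> (rstep n)\<^sup>*\<^sup>* I1 C"
  using G[of 1 n I1 n C] I1_PC unfolding I1_def by simp

lemma R1: "(rstep n)\<^sup>*\<^sup>* I1 C \<Longrightarrow> PC n 2 C c \<Longrightarrow> PC n 2 D c \<Longrightarrow> C 1 = D 1 \<Longrightarrow>
  (\<forall>i. i \<notin> {1..n} \<longrightarrow> C i = 1 \<and> D i = 1) \<Longrightarrow> (rstep n)\<^sup>*\<^sup>* I1 D"
proof -
  assume h: "(rstep n)\<^sup>*\<^sup>* I1 C" "PC n 2 C c" "PC n 2 D c" "C 1 = D 1"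
    "\<forall>i. i \<notin> {1..n} \<longrightarrow> C i = 1 \<and> D i = 1"
  have "\<forall>i. i \<notin> {2..n} \<longrightarrow> C i = D i"
  proof (intro allI impI)
    fix i assume "i \<notin> {2..n}"
    then have "i = 1 \<or> i \<notin> {1..n}" by auto
    then show "C i = D i" using h(4,5) by auto
  qed
  then have "(rstep n)\<^sup>*\<^sup>* C D" using G[of 2 n C c D] h(2,3) by simp
  then show ?thesis by (rule rtranclp_trans[OF h(1)])
qed

definition good where "good j \<longleftrightarrow> j = 0 \<or> \<not> bt r (j-1) \<or> \<not> bt r j"

lemma chain:
  assumes dn: "d \<le> n"
  shows "good j \<Longrightarrow> 0 < r mod 2^j \<Longrightarrow> \<exists>C. (rstep n)\<^sup>*\<^sup>* I1 C \<and> C 1 = r mod 2^j \<and>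
     PC n 2 C (n - r mod 2^j) \<and> (\<forall>i. i \<notin> {1..n} \<longrightarrow> C i = 1)"
proof (induction j rule: less_induct)
  case (less j)
  have n2: "2 \<le> n" using dn d2 by simp
  define w where "w = r mod 2^j"
  have w0: "0 < w" using less.prems w_def by simp
  have wr: "w \<le> r" unfolding w_def by simp
  have rd: "r < d" using d_eq r_lt by simp
  have j0: "j \<noteq> 0" using w0 unfolding w_def by (cases j) auto
  then obtain k where jk: "j = Suc k" by (cases j) auto
  show ?case
  proof (cases "bt r k")
    case False
    then have eq: "r mod 2^j = r mod 2^k" using mod_Suc2[of r k] jk by simp
    have gk: "good k" unfolding good_def using False by simp
    have kj: "k < j" using jk by simp
    have "0 < r mod 2^k" using less.prems(2) eq by simp
    from less.IH[OF kj gk this] show ?thesis unfolding eq .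
  next
    case btk: True
    have nbj: "\<not> bt r j" using less.prems(1) btk jk unfolding good_def by simp
    have jA: "j \<in> A" unfolding A_def using btk nbj jk by simp
    define b where "b = s j"
    have bj: "b < j" using s_props(1)[OF jA] b_def by simp
    have gb: "good b" using s_props(3)[OF jA] b_def unfolding good_def by auto
    define wb where "wb = r mod 2^b"
    have runeq: "w + 2^b = wb + 2^j"
      using run[of b j] s_props(2)[OF jA] bj unfolding w_def wb_def b_def by simp
    have jp: "j \<le> p" using A_le[OF jA] by simp
    show ?thesis
    proof (cases "w = 2^b")
      case True
      have wpow: "ispow w" "w < d" using True rd wr unfolding ispow_def by auto
      have c1: "w + 1 \<le> n" using wr rd dn by simp
      have one: "ispow 1" unfolding ispow_def by (rule exI[of _ 0]) simp
      have "PC n 1 (cfg n w 1) n" using cfg_PC1[OF n2 c1] w0 wpow one d2 by simp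
      then have "(rstep n)\<^sup>*\<^sup>* I1 (cfg n w 1)" using R0 cfg_out[OF n2] by simp
      moreover have "PC n 2 (cfg n w 1) (n - w)" using cfg_PC2[OF n2 c1] w0 one d2 by simp
      moreover have "\<forall>i. i \<notin> {1..n} \<longrightarrow> cfg n w 1 i = 1" using cfg_out[OF n2] by simp
      moreover have "cfg n w 1 1 = w" by (rule cfg_12)
      ultimately show ?thesis unfolding w_def[symmetric] by (intro exI[of _ "cfg n w 1"]) simp
    next
      case False
      have jA': "j \<in> A'" unfolding A'_def using jA False w_def b_def by simp
      have "b < p" using bj jp by simp
      then have "(2::nat)^b < 2^p" by simp
      then have lt: "wb + 2^j < d" using runeq wr d_eq by linarith
      have c1: "wb + 2^j \<le> n" using lt dn by simp
      have pj: "(2::nat) \<le> 2^j" using jk by simp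
      have c2: "2 \<le> wb + 2^j" using pj by simp
      have pjd: "ispow (2^j) \<and> 2^j < d" using A_pow_lt[OF jA] unfolding ispow_def by auto
      have reach0: "(rstep n)\<^sup>*\<^sup>* I1 (cfg n wb (2^j))"
      proof (cases "wb = 0")
        case True
        have "PC n 1 (cfg n wb (2^j)) n" using cfg_PC1[OF n2 c1 c2] True pjd by simp
        then show ?thesis using R0 cfg_out[OF n2] by simp
      next
        case False
        then obtain C where C: "(rstep n)\<^sup>*\<^sup>* I1 C" "C 1 = wb" "PC n 2 C (n - wb)"
          "\<forall>i. i \<notin> {1..n} \<longrightarrow> C i = 1"
          using less.IH[OF bj gb] wb_def by auto
        have "PC n 2 (cfg n wb (2^j)) (n - wb)" using cfg_PC2[OF n2 c1 c2] False pjd by simp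
        moreover have "\<forall>i. i \<notin> {1..n} \<longrightarrow> C i = 1 \<and> cfg n wb (2^j) i = 1"
          using C(4) cfg_out[OF n2] by simp
        ultimately show ?thesis using R1[OF C(1) C(3)] C(2) cfg_12 by simp
      qed
      have LR: "Lp j = (wb, 2^j)" "Rp j = (w, 2^b)"
        unfolding Lp_def Rp_def w_def wb_def b_def by simp_all
      have "\<exists>a\<in>A'. ((wb, 2^j) = Lp a \<and> (w, 2^b) = Rp a) \<or> ((wb, 2^j) = Rp a \<and> (w, 2^b) = Lp a)"
        using jA' LR by (intro bexI[of _ j]) simp_all
      then have inM: "((wb, 2^j), (w, 2^b)) \<in> M" unfolding M_def by simp
      have gs: "g (cfg n wb (2^j) 1, cfg n wb (2^j) 2) = (w, 2^b)"
        using g_M[OF inM] cfg_12 by simp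
      have st: "rstep n (cfg n wb (2^j)) ((cfg n wb (2^j))(1 := w, 2 := 2^b))"
        using rstep_I[of 1 n 2 "cfg n wb (2^j)" w "2^b"] gs n2 lt cfg_12 by simp
      have ee: "n - wb - 2^j = n - w - 2^b" using runeq by simp
      have eqc: "(cfg n wb (2^j))(1 := w, 2 := 2^b) = cfg n w (2^b)"
      proof
        fix i
        show "((cfg n wb (2^j))(1 := w, 2 := 2^b)) i = cfg n w (2^b) i"
        proof (cases "i = 1 \<or> i = 2")
          case True then show ?thesis using cfg_12 by auto
        next
          case False
          then have "((cfg n wb (2^j))(1 := w, 2 := 2^b)) i = cfg n wb (2^j) i" by simp
          also have "\<dots> = (if 3 \<le> i \<and> i \<le> n then (if i < 3 + (n - wb - 2^j) then 1 else 0) else 1)"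
            using False by (intro cfg_other) auto
          also have "\<dots> = (if 3 \<le> i \<and> i \<le> n then (if i < 3 + (n - w - 2^b) then 1 else 0) else 1)"
            unfolding ee ..
          also have "\<dots> = cfg n w (2^b) i"
            using False by (intro cfg_other[symmetric]) auto
          finally show ?thesis .
        qed
      qed
      have r1: "(rstep n)\<^sup>*\<^sup>* I1 ((cfg n wb (2^j))(1 := w, 2 := 2^b))"
        using reach0 st by (metis rtranclp.rtrancl_into_rtrancl)
      have reach1: "(rstep n)\<^sup>*\<^sup>* I1 (cfg n w (2^b))"
        using r1 eqc by simp
      have "(2::nat)^b < 2^j" using bj by simp
      moreover have "(2::nat)^j < d" using A_pow_lt[OF jA] .
      ultimately have "(2::nat)^b < d" by linarith
      moreover have "ispow ((2::nat)^b)" unfolding ispow_def by blast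
      ultimately have bd: "ispow (2^b) \<and> (2::nat)^b < d" by simp
      have c1': "w + 2^b \<le> n" using runeq c1 by simp
      have c2': "2 \<le> w + 2^b" using runeq c2 by simp
      have "PC n 2 (cfg n w (2^b)) (n - w)" using cfg_PC2[OF n2 c1' c2'] w0 bd by simp
      moreover have "\<forall>i. i \<notin> {1..n} \<longrightarrow> cfg n w (2^b) i = 1" using cfg_out[OF n2] by simp
      moreover have "cfg n w (2^b) 1 = w" by (rule cfg_12)
      ultimately show ?thesis unfolding w_def[symmetric] using reach1 by (intro exI[of _ "cfg n w (2^b)"]) simp
    qed
  qed
qed

end

context thr begin

lemma trans_I: "i \<in> {1..n} \<Longrightarrow> j \<in> {1..n} \<Longrightarrow> i \<noteq> j \<Longrightarrow> (a, b) \<in> delta (C i) (C j) \<Longrightarrow>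
  transition delta n C (C(i := a, j := b))"
  unfolding transition_def by (rule bexI[of _ i], rule bexI[of _ j]) auto

lemma reach_step: "reachable delta n X Y \<Longrightarrow> transition delta n Y Z \<Longrightarrow> reachable delta n X Z"
  unfolding reachable_def by (metis rtranclp.rtrancl_into_rtrancl)

lemma reach_trans: "reachable delta n X Y \<Longrightarrow> reachable delta n Y Z \<Longrightarrow> reachable delta n X Z"
  unfolding reachable_def by (metis rtranclp_trans)

lemma acc_reach:
  assumes dn: "d \<le> n"
  shows "\<exists>X. reachable delta n I1 X \<and> X 1 = d \<and> (\<forall>i. i \<notin> {1..n} \<longrightarrow> X i = 1)"
proof -
  have n2: "2 \<le> n" using dn d2 by simp
  have in12: "(1::nat) \<in> {1..n}" "(2::nat) \<in> {1..n}" using n2 by auto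
  show ?thesis
  proof (cases "0 < r")
    case True
    have gp: "good p" unfolding good_def using r_nbt by simp
    have rp: "r mod 2^p = r" using r_lt by simp
    obtain C where C: "(rstep n)\<^sup>*\<^sup>* I1 C" "C 1 = r" "PC n 2 C (n - r)" "\<forall>i. i \<notin> {1..n} \<longrightarrow> C i = 1"
      using chain[OF dn gp] True rp by auto
    define D where "D = cfg n r (2^p)"
    have c1: "r + 2^p \<le> n" using d_eq dn by simp
    have "(1::nat) \<le> 2^p" by simp
    then have c2: "2 \<le> r + 2^p" using True by linarith
    have pd: "(2::nat)^p < d" using d_eq True by simp
    have pw: "ispow ((2::nat)^p)" unfolding ispow_def by blast
    have "PC n 2 D (n - r)" unfolding D_def using cfg_PC2[OF n2 c1 c2] True pd pw by simp
    moreover have "\<forall>i. i \<notin> {1..n} \<longrightarrow> C i = 1 \<and> D i = 1" using C(4) cfg_out[OF n2] unfolding D_def by simp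
    ultimately have "(rstep n)\<^sup>*\<^sup>* I1 D" using R1[OF C(1) C(3)] C(2) cfg_12 unfolding D_def by simp
    then have rD: "reachable delta n I1 D" by (rule rstar_reach)
    have D12: "D 1 = r" "D 2 = 2^p" unfolding D_def using cfg_12 by auto
    have "(d, d) \<in> delta (D 1) (D 2)" unfolding delta_def using D12 d_eq by simp
    then have "transition delta n D (D(1 := d, 2 := d))" using trans_I[OF in12] by simp
    then have "reachable delta n I1 (D(1 := d, 2 := d))" using rD reach_step by blast
    moreover have "\<forall>i. i \<notin> {1..n} \<longrightarrow> (D(1 := d, 2 := d)) i = 1" using cfg_out[OF n2] in12 unfolding D_def by auto
    ultimately show ?thesis by (intro exI[of _ "D(1 := d, 2 := d)"]) simp
  next
    case False
    then have dp: "d = 2^p" using d_eq by simp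
    then have p0: "p \<noteq> 0" using d2 by (cases p) auto
    define q where "q = (2::nat)^(p-1)"
    have qq: "q + q = d" unfolding q_def dp using p0 by (cases p) auto
    have qd: "q < d" "ispow q" using qq p0 unfolding q_def ispow_def by auto
    define D where "D = cfg n q q"
    have c1: "q + q \<le> n" using qq dn by simp
    have c2: "2 \<le> q + q" using qq d2 by simp
    have "PC n 1 D n" unfolding D_def using cfg_PC1[OF n2 c1 c2] qd by simp
    then have "(rstep n)\<^sup>*\<^sup>* I1 D" using R0 cfg_out[OF n2] unfolding D_def by simp
    then have rD: "reachable delta n I1 D" by (rule rstar_reach)
    have D12: "D 1 = q" "D 2 = q" unfolding D_def using cfg_12 by auto
    have "(d, d) \<in> delta (D 1) (D 2)" unfolding delta_def using D12 qq by simp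
    then have "transition delta n D (D(1 := d, 2 := d))" using trans_I[OF in12] by simp
    then have "reachable delta n I1 (D(1 := d, 2 := d))" using rD reach_step by blast
    moreover have "\<forall>i. i \<notin> {1..n} \<longrightarrow> (D(1 := d, 2 := d)) i = 1" using cfg_out[OF n2] in12 unfolding D_def by auto
    ultimately show ?thesis by (intro exI[of _ "D(1 := d, 2 := d)"]) simp
  qed
qed

lemma tr_E: "transition delta n B C \<Longrightarrow> \<exists>i j. i \<in> {1..n} \<and> j \<in> {1..n} \<and> i \<noteq> j \<and>
   (C i, C j) \<in> delta (B i) (B j) \<and> (\<forall>k. k \<noteq> i \<and> k \<noteq> j \<longrightarrow> C k = B k)"
  unfolding transition_def by blast

lemma persist: "transition delta n B C \<Longrightarrow> B k = d \<Longrightarrow> C k = d"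
proof -
  assume t: "transition delta n B C" and bk: "B k = d"
  obtain i j where h: "i \<in> {1..n}" "j \<in> {1..n}" "i \<noteq> j" "(C i, C j) \<in> delta (B i) (B j)"
    "\<forall>k. k \<noteq> i \<and> k \<noteq> j \<longrightarrow> C k = B k" using tr_E[OF t] by blast
  show ?thesis
  proof (cases "k = i \<or> k = j")
    case True
    then have "d \<le> B i + B j" using bk by auto
    then have "(C i, C j) = (d, d)" using h(4) unfolding delta_def by simp
    then show ?thesis using True by auto
  next
    case False then show ?thesis using h(5) bk by simp
  qed
qed

lemma delta_Q: "x \<in> Q \<Longrightarrow> y \<in> Q \<Longrightarrow> delta x y \<subseteq> Q \<times> Q"
proof -
  assume xy: "x \<in> Q" "y \<in> Q"
  show ?thesis
  proof (cases "d \<le> x + y")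
    case True then show ?thesis unfolding delta_def using d_Q by simp
  next
    case False
    then have "fst (g (x,y)) \<in> Q \<and> snd (g (x,y)) \<in> Q" using g_Q xy by simp
    then show ?thesis unfolding delta_def using False by (cases "g (x,y)") simp
  qed
qed

lemma inv_reach: "reachable delta n I1 C \<Longrightarrow> (\<forall>k\<in>{1..n}. C k \<in> Q) \<and> (\<forall>k. k \<notin> {1..n} \<longrightarrow> C k = 1)"
  unfolding reachable_def
proof (induction rule: rtranclp_induct)
  case base then show ?case unfolding I1_def using one_Q by simp
next
  case (step B C)
  obtain i j where h: "i \<in> {1..n}" "j \<in> {1..n}" "i \<noteq> j" "(C i, C j) \<in> delta (B i) (B j)"
    "\<forall>k. k \<noteq> i \<and> k \<noteq> j \<longrightarrow> C k = B k" using tr_E[OF step.hyps(2)] by blast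
  have "delta (B i) (B j) \<subseteq> Q \<times> Q" using delta_Q step.IH h(1,2) by simp
  then have cij: "C i \<in> Q" "C j \<in> Q" using h(4) by auto
  have "\<forall>k\<in>{1..n}. C k \<in> Q"
  proof
    fix k assume "k \<in> {1..n}"
    then show "C k \<in> Q" using cij h(5) step.IH by (cases "k = i \<or> k = j") auto
  qed
  moreover have "\<forall>k. k \<notin> {1..n} \<longrightarrow> C k = 1" using h step.IH by auto
  ultimately show ?case by simp
qed

definition AF :: "nat \<Rightarrow> nat \<Rightarrow> nat" where "AF n = (\<lambda>i. if i \<in> {1..n} then d else 1)"

lemma spread: "k0 \<in> {1..n} \<Longrightarrow> C k0 = d \<Longrightarrow> reachable delta n C (\<lambda>i. if i \<in> {1..n} then d else C i)"
proof (induction "card {i\<in>{1..n}. C i \<noteq> d}" arbitrary: C rule: less_induct)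
  case less
  show ?case
  proof (cases "\<exists>k\<in>{1..n}. C k \<noteq> d")
    case False
    then have "(\<lambda>i. if i \<in> {1..n} then d else C i) = C" by (auto simp: fun_eq_iff)
    then show ?thesis unfolding reachable_def by simp
  next
    case True
    then obtain k where k: "k \<in> {1..n}" "C k \<noteq> d" by blast
    have kk: "k \<noteq> k0" using k less.prems by auto
    have "(d, d) \<in> delta (C k0) (C k)" unfolding delta_def using less.prems by simp
    then have t: "transition delta n C (C(k0 := d, k := d))" using trans_I[OF less.prems(1) k(1) kk[symmetric]] by simp
    let ?C' = "C(k0 := d, k := d)"
    have sub: "{i\<in>{1..n}. ?C' i \<noteq> d} \<subset> {i\<in>{1..n}. C i \<noteq> d}" using k by auto
    have "card {i\<in>{1..n}. ?C' i \<noteq> d} < card {i\<in>{1..n}. C i \<noteq> d}"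
      using sub by (rule psubset_card_mono[rotated]) simp
    moreover have "?C' k0 = d" by simp
    ultimately have r: "reachable delta n ?C' (\<lambda>i. if i \<in> {1..n} then d else ?C' i)"
      using less.hyps less.prems(1) by blast
    have "(\<lambda>i. if i \<in> {1..n} then d else ?C' i) = (\<lambda>i. if i \<in> {1..n} then d else C i)"
      using less.prems(1) k(1) by (auto simp: fun_eq_iff)
    then have r': "reachable delta n ?C' (\<lambda>i. if i \<in> {1..n} then d else C i)" using r by simp
    have "reachable delta n C ?C'" unfolding reachable_def using t by simp
    then show ?thesis using r' reach_trans by blast
  qed
qed

lemma nonacc: "reachable delta n I1 C \<Longrightarrow> (\<forall>k\<in>{1..n}. C k \<noteq> d) \<Longrightarrow> (rstep n)\<^sup>*\<^sup>* I1 C"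
  unfolding reachable_def
proof (induction rule: rtranclp_induct)
  case base then show ?case by simp
next
  case (step B C)
  have Bn: "\<forall>k\<in>{1..n}. B k \<noteq> d" using persist[OF step.hyps(2)] step.prems by blast
  obtain i j where h: "i \<in> {1..n}" "j \<in> {1..n}" "i \<noteq> j" "(C i, C j) \<in> delta (B i) (B j)"
    "\<forall>k. k \<noteq> i \<and> k \<noteq> j \<longrightarrow> C k = B k" using tr_E[OF step.hyps(2)] by blast
  have lt: "B i + B j < d"
  proof (rule ccontr)
    assume "\<not> B i + B j < d"
    then have "(C i, C j) = (d, d)" using h(4) unfolding delta_def by simp
    then show False using step.prems h(1) by simp
  qed
  then have gij: "g (B i, B j) = (C i, C j)" using h(4) unfolding delta_def by simp
  have "C = B(i := C i, j := C j)" using h(5) by (auto simp: fun_eq_iff)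
  moreover have "rstep n B (B(i := C i, j := C j))" using rstep_I[OF h(1-3) lt gij] .
  ultimately have "rstep n B C" by simp
  moreover have "(rstep n)\<^sup>*\<^sup>* I1 B" using step.IH Bn by simp
  ultimately show ?case by (metis rtranclp.rtrancl_into_rtrancl)
qed

lemma live: "d \<le> n \<Longrightarrow> reachable delta n I1 C \<Longrightarrow> reachable delta n C (AF n)"
proof -
  assume dn: "d \<le> n" and rc: "reachable delta n I1 C"
  have n2: "2 \<le> n" using dn d2 by simp
  have out: "\<forall>k. k \<notin> {1..n} \<longrightarrow> C k = 1" using inv_reach[OF rc] by simp
  show ?thesis
  proof (cases "\<exists>k\<in>{1..n}. C k = d")
    case True
    then obtain k where k: "k \<in> {1..n}" "C k = d" by blast
    have "(\<lambda>i. if i \<in> {1..n} then d else C i) = AF n" unfolding AF_def using out by (auto simp: fun_eq_iff)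
    then show ?thesis using spread[of k n C] k by simp
  next
    case False
    then have "(rstep n)\<^sup>*\<^sup>* I1 C" using nonacc[OF rc] by simp
    then have "reachable delta n C I1" using rstar_sym rstar_reach by blast
    moreover obtain X where X: "reachable delta n I1 X" "X 1 = d" "\<forall>i. i \<notin> {1..n} \<longrightarrow> X i = 1"
      using acc_reach[OF dn] by blast
    moreover have "(\<lambda>i. if i \<in> {1..n} then d else X i) = AF n" unfolding AF_def using X(3) by (auto simp: fun_eq_iff)
    moreover have "(1::nat) \<in> {1..n}" using n2 by simp
    ultimately show ?thesis using spread[of 1 n X] reach_trans by metis
  qed
qed

lemma AF_abs: "transition delta n (AF n) D \<Longrightarrow> D = AF n"
proof -
  assume t: "transition delta n (AF n) D"
  obtain i j where h: "i \<in> {1..n}" "j \<in> {1..n}" "i \<noteq> j" "(D i, D j) \<in> delta (AF n i) (AF n j)"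
    "\<forall>k. k \<noteq> i \<and> k \<noteq> j \<longrightarrow> D k = AF n k" using tr_E[OF t] by blast
  have "AF n i = d" "AF n j = d" using h(1,2) unfolding AF_def by auto
  then have "(D i, D j) = (d, d)" using h(4) unfolding delta_def by simp
  then show ?thesis using h(1,2,5) unfolding AF_def by (auto simp: fun_eq_iff)
qed

lemma safety: "reachable delta n I1 C \<Longrightarrow> n < d \<Longrightarrow> (\<forall>k\<in>{1..n}. C k \<in> Q \<and> C k < d) \<and> sum C {1..n} = n"
  unfolding reachable_def
proof (induction rule: rtranclp_induct)
  case base then show ?case unfolding I1_def using one_Q d2 by simp
next
  case (step B C)
  have IH: "\<forall>k\<in>{1..n}. B k \<in> Q \<and> B k < d" "sum B {1..n} = n" using step.IH step.prems by auto
  obtain i j where h: "i \<in> {1..n}" "j \<in> {1..n}" "i \<noteq> j" "(C i, C j) \<in> delta (B i) (B j)"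
    "\<forall>k. k \<noteq> i \<and> k \<noteq> j \<longrightarrow> C k = B k" using tr_E[OF step.hyps(2)] by blast
  have "sum B {1..n} = B i + B j + sum B ({1..n} - {i, j})" using sum_two h(1-3) by blast
  then have lt: "B i + B j < d" using IH(2) step.prems by linarith
  then have gij: "g (B i, B j) = (C i, C j)" using h(4) unfolding delta_def by simp
  have cq: "C i \<in> Q" "C j \<in> Q" using g_Q[of "B i" "B j"] IH(1) h(1,2) lt gij by auto
  have cs: "C i + C j = B i + B j" using g_sum[of "B i" "B j"] gij by simp
  have "\<forall>k\<in>{1..n}. C k \<in> Q \<and> C k < d"
  proof
    fix k assume k: "k \<in> {1..n}"
    show "C k \<in> Q \<and> C k < d"
    proof (cases "k = i \<or> k = j")
      case True then show ?thesis using cq cs lt by auto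
    next
      case False then show ?thesis using h(5) IH(1) k by simp
    qed
  qed
  moreover have "C = B(i := C i, j := C j)" using h(5) by (auto simp: fun_eq_iff)
  moreover have "sum (B(i := C i, j := C j)) {1..n} + B i + B j = sum B {1..n} + C i + C j"
    using sum_upd2 h(1-3) by blast
  ultimately show ?case using cs IH(2) by simp
qed

lemma fair_live:
  assumes dn: "d \<le> n" and ex: "execution 1 delta n E" and fr: "fair delta n E"
  shows "\<exists>i0. \<forall>i\<ge>i0. E i ` {1..n} \<subseteq> {d}"
proof -
  have E0: "E 0 = I1" using ex unfolding execution_def init_config_def I1_def by simp
  have trE: "\<And>i. transition delta n (E i) (E (Suc i))" using ex unfolding execution_def by simp
  have reachE: "\<And>i. reachable delta n I1 (E i)"
  proof -
    fix i show "reachable delta n I1 (E i)"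
    proof (induction i)
      case 0 then show ?case using E0 unfolding reachable_def by simp
    next
      case (Suc i) then show ?case using reach_step trE by blast
    qed
  qed
  let ?CS = "{f. \<forall>x. (x \<in> {1..n} \<longrightarrow> f x \<in> Q) \<and> (x \<notin> {1..n} \<longrightarrow> f x = 1)}"
  have finCS: "finite ?CS" using finite_set_of_finite_funs[of "{1..n}" Q 1] Q_fin by simp
  have "range E \<subseteq> ?CS" using inv_reach reachE by blast
  then have "finite (range E)" using finCS finite_subset by blast
  moreover have "infinite (UNIV :: nat set)" by simp
  ultimately obtain y where y: "y \<in> range E" "infinite (E -` {y})"
    using inf_img_fin_dom[of E UNIV] by blast
  have "E -` {y} = {i. E i = y}" by auto
  then have inf: "\<exists>\<^sub>\<infinity>i. E i = y" using y(2) by (simp add: frequently_cofinite)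
  obtain i1 where "y = E i1" using y(1) by blast
  then have "reachable delta n I1 y" using reachE by simp
  then have "reachable delta n y (AF n)" using live[OF dn] by simp
  then have "\<exists>\<^sub>\<infinity>i. E i = AF n" using fr inf unfolding fair_def by blast
  then obtain i0 where i0: "E i0 = AF n" using frequently_ex by blast
  have all: "\<forall>i\<ge>i0. E i = AF n"
  proof (intro allI impI)
    fix i assume "i0 \<le> i"
    then show "E i = AF n"
    proof (induction i rule: dec_induct)
      case base then show ?case using i0 .
    next
      case (step m) then show ?case using AF_abs trE by metis
    qed
  qed
  show ?thesis
  proof (intro exI[of _ i0] allI impI)
    fix i assume "i0 \<le> i"
    then have "E i = AF n" using all by simp
    then show "E i ` {1..n} \<subseteq> {d}" unfolding AF_def by auto
  qed
qed

end

lemma case_d1: "\<exists>Q Q0 Q1 qinit \<delta>.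
        population_protocol Q Q0 Q1 qinit \<delta> \<and> deterministic Q \<delta> \<and>
        computes_1aware Q Q0 Q1 qinit \<delta> (\<lambda>n. n \<ge> (1::nat)) \<and>
        real (card Q) \<le> log 2 (real (1::nat)) + real (min (count_ones 1) (count_zeros (1 - 1))) + 5"
proof -
  let ?\<delta> = "\<lambda>x y::nat. {(1::nat, 1::nat)}"
  have pp: "population_protocol {1} {} {1} 1 ?\<delta>" unfolding population_protocol_def by simp
  have det: "deterministic {1} ?\<delta>" unfolding deterministic_def by simp
  have comp: "computes_1aware {1} {} {1} 1 ?\<delta> (\<lambda>n. n \<ge> 1)"
    unfolding computes_1aware_def
  proof (intro allI impI conjI)
    fix n :: nat and E assume "1 \<le> n" and ex: "execution 1 ?\<delta> n E \<and> fair ?\<delta> n E"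
    have "\<forall>i. E i = (\<lambda>_. 1)"
    proof
      fix i show "E i = (\<lambda>_. 1)"
      proof (induction i)
        case 0 then show ?case using ex unfolding execution_def init_config_def by simp
      next
        case (Suc i)
        have "transition ?\<delta> n (E i) (E (Suc i))" using ex unfolding execution_def by simp
        then obtain a b where h: "a \<in> {1..n}" "b \<in> {1..n}" "(E (Suc i) a, E (Suc i) b) = (1,1)"
          "\<forall>k. k \<noteq> a \<and> k \<noteq> b \<longrightarrow> E (Suc i) k = E i k" unfolding transition_def by auto
        show ?case using h Suc.IH by (auto simp: fun_eq_iff)
      qed
    qed
    then show "\<exists>i0. \<forall>i\<ge>i0. E i ` {1..n} \<subseteq> {1}" by auto
  qed simp
  have "real (card {1::nat}) \<le> log 2 (real (1::nat)) + real (min (count_ones 1) (count_zeros (1 - 1))) + 5"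
    by simp
  then show ?thesis using pp det comp by blast
qed

theorem theorem1:
  shows "\<exists>c::real. \<forall>d::nat. d \<ge> 1 \<longrightarrow>
     (\<exists>Q Q0 Q1 qinit \<delta>.
        population_protocol Q Q0 Q1 qinit \<delta> \<and> deterministic Q \<delta> \<and>
        computes_1aware Q Q0 Q1 qinit \<delta> (\<lambda>n. n \<ge> d) \<and>
        real (card Q) \<le> log 2 (real d) + real (min (count_ones d) (count_zeros (d - 1))) + c)"
proof (intro exI[of _ 5] allI impI)
  fix d :: nat assume d1: "d \<ge> 1"
  show "\<exists>Q Q0 Q1 qinit \<delta>.
        population_protocol Q Q0 Q1 qinit \<delta> \<and> deterministic Q \<delta> \<and>
        computes_1aware Q Q0 Q1 qinit \<delta> (\<lambda>n. n \<ge> d) \<and>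
        real (card Q) \<le> log 2 (real d) + real (min (count_ones d) (count_zeros (d - 1))) + 5"
  proof (cases "d = 1")
    case True then show ?thesis using case_d1 by simp
  next
    case False
    then have d2: "2 \<le> d" using d1 by simp
    obtain p where p: "2^p \<le> d" "d < 2^(p+1)" using ex_power_ivl1[of 2 d] d1 by auto
    interpret T: thr d p using d2 p by unfold_locales simp_all
    have pp: "population_protocol T.Q (T.Q - {d}) {d} 1 T.delta"
      unfolding population_protocol_def
    proof (intro conjI ballI)
      show "finite T.Q" by (rule T.Q_fin)
      show "T.Q = T.Q - {d} \<union> {d}" using T.d_Q by auto
      show "(T.Q - {d}) \<inter> {d} = {}" by simp
      show "1 \<in> T.Q" by (rule T.one_Q)
      fix q1 q2 assume "q1 \<in> T.Q" "q2 \<in> T.Q"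
      then show "T.delta q1 q2 \<subseteq> T.Q \<times> T.Q" by (rule T.delta_Q)
      show "T.delta q1 q2 \<noteq> {}" unfolding T.delta_def by simp
    qed
    have det: "deterministic T.Q T.delta" unfolding deterministic_def T.delta_def by simp
    have I1: "init_config 1 = T.I1" unfolding init_config_def T.I1_def by simp
    have comp: "computes_1aware T.Q (T.Q - {d}) {d} 1 T.delta (\<lambda>n. n \<ge> d)"
      unfolding computes_1aware_def
    proof (intro allI impI conjI)
      fix n :: nat and C assume "1 \<le> n" "\<not> d \<le> n" "reachable T.delta n (init_config 1) C"
      then have "(\<forall>k\<in>{1..n}. C k \<in> T.Q \<and> C k < d)" using T.safety[of n C] I1 by simp
      then show "C ` {1..n} \<subseteq> T.Q - {d}" by auto
    next
      fix n :: nat and E assume "1 \<le> n" "d \<le> n" "execution 1 T.delta n E \<and> fair T.delta n E"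
      then show "\<exists>i0. \<forall>i\<ge>i0. E i ` {1..n} \<subseteq> {d}" using T.fair_live by blast
    qed
    show ?thesis using pp det comp T.card_bound by blast
  qed
qed

end
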